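(* Let $\varphi:A\to B$ be a homomorphism of generalized rings and $\mathfrak b$ an h-ideal of $B$. Let $\varphi^*:spec(B)\to spec(A)$ be $\mathfrak q\mapsto\varphi_{[1]}^{-1}(\mathfrak q)$. Then $V_A(\varphi_{[1]}^{-1}(\mathfrak b))$ is the closure in $spec(A)$ of $\varphi^*(V_B(\mathfrak b))$.
   Context: All sets $X,Y,Z,W$ below are finite. A partial map $f:X\rightharpoonup Y$ is a map $f:D(f)\to Y$ defined on a subset $D(f)\subseteq X$; $Set_\bullet(X,Y)$ is the set of partial maps. $\mathbb F_\bullet$ is the category of finite sets with partial bijections; $f^t$ is the inverse. $[1]=\{1\}$, $c_X:X\to[1]$ the total map. A generalized ring $A$ consists of: a functor $X\mapsto A_X$ from $\mathbb F_\bullet$ to pointed sets with $A_\emptyset=\{0\}$; $A_f=\prod_{y\in Y}A_{f^{-1}(y)}$ for $f\in Set_\bullet(X,Y)$ (so $A_{c_X}=A_X$, $A_{id_X}=(A_{[1]})^X$); multiplications $\circ:A_Y\times A_f\to A_X$ and contractions $(\,,\,):A_X\times A_f\to A_Y$, zero when an argument is zero, extended fibrewise for $g\in Set_\bullet(Y,Z)$ to $\circ:A_g\times A_f\to A_{g\circ f}$, $(\,,\,):A_{g\circ f}\times A_f\to A_g$ via $(a\circ b)^{(z)}=a^{(z)}\circ b|_z$, $(c,b)^{(z)}=(c^{(z)},b|_z)$ ($b|_z=(b^{(y)})_{y\in g^{-1}(z)}$ for the restriction $f|_z:(g\circ f)^{-1}(z)\rightharpoonup g^{-1}(z)$); and a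 unit $1\in A_{[1]}$ (with transports $1_x$, and $1_f\in A_f$ for partial bijections $f$ with components $1_{f^t(y)}$ on the image, $0$ elsewhere); satisfying for $W\xleftarrow{h}Z\xleftarrow{g}Y\xleftarrow{f}X$: $d\circ(c\circ b)=(d\circ c)\circ b$; $(d,a\circ c)=((d,c),a)$ ($d\in A_{h\circ g\circ f},a\in A_g,c\in A_f$); $(d\circ c,a)=(d,(a,c))$ ($d\in A_{h\circ g},a\in A_{g\circ f},c\in A_f$); $(d\circ a,c)=d\circ(a,c)$ ($d\in A_h,a\in A_{g\circ f},c\in A_f$); for $Z\xrightarrow{g}Y\xleftarrow{f}X$, $h\in Set_\bullet(Y,W)$, $P=\{(z,x)\in D(g)\times D(f):g(z)=f(x)\}$ with projections $\tilde f,\tilde g$, $\tilde c^{(z)}=c^{(g(z))}$, $\tilde a^{(x)}=a^{(f(x))}$: $(d,c)\circ a=(d\circ\tilde a,\tilde c)$ ($d\in A_{h\circ f},a\in A_g,c\in A_f$); $a\circ1_{id_X}=1_{id_Y}\circ a=(a,1_{id_X})=a$ ($a\in A_f$); $a\circ1_{f^t}=(a,1_f)=f_A(a)$ ($a\in A_X$, $f$ a partial bijection). A homomorphism $\varphi:A\to B$ is a family of base-point preserving maps $\varphi_X:A_X\to B_X$ preserving multiplication, contraction (componentwise on $A_f$) and $1$. An h-ideal is a subset $\mathfrak a\subseteq A_{[1]}$ with $(b\circ c,d)\in\mathfrak a$ for all finite $X$, $b,d\in A_X$, $c\in\mathfrak a^X\subseteq(A_{[1]})^X$; proper if $1\notin\mathfrak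 a$. A prime is a proper h-ideal $\mathfrak p$ with $a\circ b\in\mathfrak p\Rightarrow a\in\mathfrak p$ or $b\in\mathfrak p$; $spec(A)$ is the set of primes, with the Zariski topology whose closed sets are $V_A(\mathfrak a)=\{\mathfrak p\in spec(A):\mathfrak p\supseteq\mathfrak a\}$, $\mathfrak a\subseteq A_{[1]}$. *)

theory Defs
  imports "HOL-Library.FuncSet" "HOL-Library.Nat_Bijection"
begin

text \<open>Finite sets are modelled as finite subsets of nat; partial maps X -> Y as
  maps nat => nat option with dom inside X and ran inside Y.  [1] is the set {1}.\<close>

record 'a gring =
  carr :: "nat set \<Rightarrow> 'a set"
  zer  :: "nat set \<Rightarrow> 'a"
  tr   :: "nat set \<Rightarrow> nat set \<Rightarrow> (nat \<Rightarrow> nat option) \<Rightarrow> 'a \<Rightarrow> 'a"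
  mul  :: "nat set \<Rightarrow> nat set \<Rightarrow> (nat \<Rightarrow> nat option) \<Rightarrow> 'a \<Rightarrow> (nat \<Rightarrow> 'a) \<Rightarrow> 'a"
  con  :: "nat set \<Rightarrow> nat set \<Rightarrow> (nat \<Rightarrow> nat option) \<Rightarrow> 'a \<Rightarrow> (nat \<Rightarrow> 'a) \<Rightarrow> 'a"
  one  :: 'a

definition pmap :: "nat set \<Rightarrow> nat set \<Rightarrow> (nat \<Rightarrow> nat option) \<Rightarrow> bool" where
  "pmap X Y f \<longleftrightarrow> dom f \<subseteq> X \<and> ran f \<subseteq> Y"

definition pbij :: "nat set \<Rightarrow> nat set \<Rightarrow> (nat \<Rightarrow> nat option) \<Rightarrow> bool" where
  "pbij X Y f \<longleftrightarrow> pmap X Y f \<and> inj_on f (dom f)"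

definition fib :: "(nat \<Rightarrow> nat option) \<Rightarrow> nat \<Rightarrow> nat set" where
  "fib f y = {x. f x = Some y}"

definition idm :: "nat set \<Rightarrow> nat \<Rightarrow> nat option" where
  "idm X = (\<lambda>x. if x \<in> X then Some x else None)"

definition cmap :: "nat set \<Rightarrow> nat \<Rightarrow> nat option" where
  "cmap X = (\<lambda>x. if x \<in> X then Some 1 else None)"

definition ptr :: "(nat \<Rightarrow> nat option) \<Rightarrow> nat \<Rightarrow> nat option" where
  "ptr f = (\<lambda>y. if y \<in> ran f then Some (THE x. f x = Some y) else None)"

text \<open>A_f for f : X -> Y, as extensional tuples indexed by Y\<close>
definition tup :: "'a gring \<Rightarrow> nat set \<Rightarrow> (nat \<Rightarrow> nat option) \<Rightarrow> (nat \<Rightarrow> 'a) set" where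
  "tup A Y f = {b \<in> extensional Y. \<forall>y\<in>Y. b y \<in> carr A (fib f y)}"

definition ztup :: "'a gring \<Rightarrow> nat set \<Rightarrow> (nat \<Rightarrow> nat option) \<Rightarrow> nat \<Rightarrow> 'a" where
  "ztup A Y f = restrict (\<lambda>y. zer A (fib f y)) Y"

text \<open>fibrewise multiplication A_g x A_f -> A_(g o f), g : Y -> Z, f : X -> Y\<close>
definition fmul :: "'a gring \<Rightarrow> nat set \<Rightarrow> (nat \<Rightarrow> nat option) \<Rightarrow> (nat \<Rightarrow> nat option)
    \<Rightarrow> (nat \<Rightarrow> 'a) \<Rightarrow> (nat \<Rightarrow> 'a) \<Rightarrow> nat \<Rightarrow> 'a" where
  "fmul A Z g f a b = restrict (\<lambda>z. mul A (fib (g \<circ>\<^sub>m f) z) (fib g z)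
       (f |` fib (g \<circ>\<^sub>m f) z) (a z) (restrict b (fib g z))) Z"

text \<open>fibrewise contraction A_(g o f) x A_f -> A_g\<close>
definition fcon :: "'a gring \<Rightarrow> nat set \<Rightarrow> (nat \<Rightarrow> nat option) \<Rightarrow> (nat \<Rightarrow> nat option)
    \<Rightarrow> (nat \<Rightarrow> 'a) \<Rightarrow> (nat \<Rightarrow> 'a) \<Rightarrow> nat \<Rightarrow> 'a" where
  "fcon A Z g f c b = restrict (\<lambda>z. con A (fib (g \<circ>\<^sub>m f) z) (fib g z)
       (f |` fib (g \<circ>\<^sub>m f) z) (c z) (restrict b (fib g z))) Z"

definition unit_at :: "'a gring \<Rightarrow> nat \<Rightarrow> 'a" where
  "unit_at A x = tr A {1} {x} [1 \<mapsto> x] (one A)"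

definition unit_pb :: "'a gring \<Rightarrow> nat set \<Rightarrow> (nat \<Rightarrow> nat option) \<Rightarrow> nat \<Rightarrow> 'a" where
  "unit_pb A Y f = restrict (\<lambda>y. if y \<in> ran f then unit_at A (THE x. f x = Some y) else zer A {}) Y"

text \<open>the identification (A_[1])^X = A_(id_X)\<close>
definition embed :: "'a gring \<Rightarrow> nat set \<Rightarrow> (nat \<Rightarrow> 'a) \<Rightarrow> nat \<Rightarrow> 'a" where
  "embed A X c = restrict (\<lambda>x. tr A {1} {x} [1 \<mapsto> x] (c x)) X"

text \<open>fibre product P of Z -g-> Y <-f- X, encoded into nat, with projections\<close>
definition pb :: "(nat \<Rightarrow> nat option) \<Rightarrow> (nat \<Rightarrow> nat option) \<Rightarrow> nat set" where
  "pb g f = prod_encode ` {(z, x). z \<in> dom g \<and> x \<in> dom f \<and> g z = f x}"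

definition pbf :: "(nat \<Rightarrow> nat option) \<Rightarrow> (nat \<Rightarrow> nat option) \<Rightarrow> nat \<Rightarrow> nat option" where
  "pbf g f = (\<lambda>p. if p \<in> pb g f then Some (fst (prod_decode p)) else None)"

definition pbg :: "(nat \<Rightarrow> nat option) \<Rightarrow> (nat \<Rightarrow> nat option) \<Rightarrow> nat \<Rightarrow> nat option" where
  "pbg g f = (\<lambda>p. if p \<in> pb g f then Some (snd (prod_decode p)) else None)"

text \<open>a~ in A_(g~) (indexed by X): a~^(x) = a^(f(x)), transported along the canonical bijection\<close>
definition pb_a :: "'a gring \<Rightarrow> (nat \<Rightarrow> nat option) \<Rightarrow> (nat \<Rightarrow> nat option) \<Rightarrow> nat set
    \<Rightarrow> (nat \<Rightarrow> 'a) \<Rightarrow> nat \<Rightarrow> 'a" where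
  "pb_a A g f X a = restrict (\<lambda>x. if x \<in> dom f then
      tr A (fib g (the (f x))) (fib (pbg g f) x)
        (\<lambda>z. if z \<in> fib g (the (f x)) then Some (prod_encode (z, x)) else None) (a (the (f x)))
      else zer A {}) X"

text \<open>c~ in A_(f~) (indexed by Z): c~^(z) = c^(g(z))\<close>
definition pb_c :: "'a gring \<Rightarrow> (nat \<Rightarrow> nat option) \<Rightarrow> (nat \<Rightarrow> nat option) \<Rightarrow> nat set
    \<Rightarrow> (nat \<Rightarrow> 'a) \<Rightarrow> nat \<Rightarrow> 'a" where
  "pb_c A g f Z c = restrict (\<lambda>z. if z \<in> dom g then
      tr A (fib f (the (g z))) (fib (pbf g f) z)
        (\<lambda>x. if x \<in> fib f (the (g z)) then Some (prod_encode (z, x)) else None) (c (the (g z)))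
      else zer A {}) Z"

definition gring :: "'a gring \<Rightarrow> bool" where
  "gring A \<longleftrightarrow>
    carr A {} = {zer A {}} \<and>
    (\<forall>X. finite X \<longrightarrow> zer A X \<in> carr A X) \<and>
    (\<forall>X Y f a. finite X \<and> finite Y \<and> pbij X Y f \<and> a \<in> carr A X \<longrightarrow> tr A X Y f a \<in> carr A Y) \<and>
    (\<forall>X Y f. finite X \<and> finite Y \<and> pbij X Y f \<longrightarrow> tr A X Y f (zer A X) = zer A Y) \<and>
    (\<forall>X a. finite X \<and> a \<in> carr A X \<longrightarrow> tr A X X (idm X) a = a) \<and>
    (\<forall>X Y Z f g a. finite X \<and> finite Y \<and> finite Z \<and> pbij X Y f \<and> pbij Y Z g \<and> a \<in> carr A X \<longrightarrow>
        tr A X Z (g \<circ>\<^sub>m f) a = tr A Y Z g (tr A X Y f a)) \<and>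
    (\<forall>X Y f a b. finite X \<and> finite Y \<and> pmap X Y f \<and> a \<in> carr A Y \<and> b \<in> tup A Y f \<longrightarrow>
        mul A X Y f a b \<in> carr A X \<and>
        ((a = zer A Y \<or> b = ztup A Y f) \<longrightarrow> mul A X Y f a b = zer A X)) \<and>
    (\<forall>X Y f c b. finite X \<and> finite Y \<and> pmap X Y f \<and> c \<in> carr A X \<and> b \<in> tup A Y f \<longrightarrow>
        con A X Y f c b \<in> carr A Y \<and>
        ((c = zer A X \<or> b = ztup A Y f) \<longrightarrow> con A X Y f c b = zer A Y)) \<and>
    one A \<in> carr A {1} \<and>
    (\<forall>W Z Y X h g f. finite W \<and> finite Z \<and> finite Y \<and> finite X \<and>
        pmap Z W h \<and> pmap Y Z g \<and> pmap X Y f \<longrightarrow>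
      (\<forall>d\<in>tup A W h. \<forall>c\<in>tup A Z g. \<forall>b\<in>tup A Y f.
          fmul A W h (g \<circ>\<^sub>m f) d (fmul A Z g f c b) = fmul A W (h \<circ>\<^sub>m g) f (fmul A W h g d c) b) \<and>
      (\<forall>d\<in>tup A W (h \<circ>\<^sub>m g \<circ>\<^sub>m f). \<forall>a\<in>tup A Z g. \<forall>c\<in>tup A Y f.
          fcon A W h (g \<circ>\<^sub>m f) d (fmul A Z g f a c) = fcon A W h g (fcon A W (h \<circ>\<^sub>m g) f d c) a) \<and>
      (\<forall>d\<in>tup A W (h \<circ>\<^sub>m g). \<forall>a\<in>tup A Z (g \<circ>\<^sub>m f). \<forall>c\<in>tup A Y f.
          fcon A W h (g \<circ>\<^sub>m f) (fmul A W (h \<circ>\<^sub>m g) f d c) a = fcon A W h g d (fcon A Z g f a c)) \<and>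
      (\<forall>d\<in>tup A W h. \<forall>a\<in>tup A Z (g \<circ>\<^sub>m f). \<forall>c\<in>tup A Y f.
          fcon A W (h \<circ>\<^sub>m g) f (fmul A W h (g \<circ>\<^sub>m f) d a) c = fmul A W h g d (fcon A Z g f a c))) \<and>
    (\<forall>Z Y X W g f h. finite Z \<and> finite Y \<and> finite X \<and> finite W \<and>
        pmap Z Y g \<and> pmap X Y f \<and> pmap Y W h \<longrightarrow>
      (\<forall>d\<in>tup A W (h \<circ>\<^sub>m f). \<forall>a\<in>tup A Y g. \<forall>c\<in>tup A Y f.
          fmul A W h g (fcon A W h f d c) a =
          fcon A W (h \<circ>\<^sub>m g) (pbf g f) (fmul A W (h \<circ>\<^sub>m f) (pbg g f) d (pb_a A g f X a)) (pb_c A g f Z c))) \<and>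
    (\<forall>X Y f. finite X \<and> finite Y \<and> pmap X Y f \<longrightarrow>
      (\<forall>a\<in>tup A Y f.
          fmul A Y f (idm X) a (unit_pb A X (idm X)) = a \<and>
          fmul A Y (idm Y) f (unit_pb A Y (idm Y)) a = a \<and>
          fcon A Y f (idm X) a (unit_pb A X (idm X)) = a)) \<and>
    (\<forall>X Y f. finite X \<and> finite Y \<and> pbij X Y f \<longrightarrow>
      (\<forall>a\<in>carr A X.
          mul A Y X (ptr f) a (unit_pb A X (ptr f)) = tr A X Y f a \<and>
          con A X Y f a (unit_pb A Y f) = tr A X Y f a))"

definition htup :: "(nat set \<Rightarrow> 'a \<Rightarrow> 'b) \<Rightarrow> nat set \<Rightarrow> (nat \<Rightarrow> nat option) \<Rightarrow> (nat \<Rightarrow> 'a) \<Rightarrow> nat \<Rightarrow> 'b" where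
  "htup \<phi> Y f b = restrict (\<lambda>y. \<phi> (fib f y) (b y)) Y"

definition ghom :: "'a gring \<Rightarrow> 'b gring \<Rightarrow> (nat set \<Rightarrow> 'a \<Rightarrow> 'b) \<Rightarrow> bool" where
  "ghom A B \<phi> \<longleftrightarrow>
    (\<forall>X. finite X \<longrightarrow> (\<forall>a\<in>carr A X. \<phi> X a \<in> carr B X) \<and> \<phi> X (zer A X) = zer B X) \<and>
    (\<forall>X Y f a b. finite X \<and> finite Y \<and> pmap X Y f \<and> a \<in> carr A Y \<and> b \<in> tup A Y f \<longrightarrow>
        \<phi> X (mul A X Y f a b) = mul B X Y f (\<phi> Y a) (htup \<phi> Y f b)) \<and>
    (\<forall>X Y f c b. finite X \<and> finite Y \<and> pmap X Y f \<and> c \<in> carr A X \<and> b \<in> tup A Y f \<longrightarrow>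
        \<phi> Y (con A X Y f c b) = con B X Y f (\<phi> X c) (htup \<phi> Y f b)) \<and>
    \<phi> {1} (one A) = one B"

definition mul1 :: "'a gring \<Rightarrow> 'a \<Rightarrow> 'a \<Rightarrow> 'a" where
  "mul1 A a b = mul A {1} {1} (idm {1}) a (restrict (\<lambda>_. b) {1})"

definition h_ideal :: "'a gring \<Rightarrow> 'a set \<Rightarrow> bool" where
  "h_ideal A I \<longleftrightarrow> I \<subseteq> carr A {1} \<and>
    (\<forall>X. finite X \<longrightarrow> (\<forall>b\<in>carr A X. \<forall>d\<in>carr A X. \<forall>c\<in>extensional X. (\<forall>x\<in>X. c x \<in> I) \<longrightarrow>
       con A X {1} (cmap X) (mul A X X (idm X) b (embed A X c)) (restrict (\<lambda>_. d) {1}) \<in> I))"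

definition gprime :: "'a gring \<Rightarrow> 'a set \<Rightarrow> bool" where
  "gprime A P \<longleftrightarrow> h_ideal A P \<and> one A \<notin> P \<and>
    (\<forall>a\<in>carr A {1}. \<forall>b\<in>carr A {1}. mul1 A a b \<in> P \<longrightarrow> a \<in> P \<or> b \<in> P)"

definition gspec :: "'a gring \<Rightarrow> 'a set set" where
  "gspec A = {P. gprime A P}"

definition Vz :: "'a gring \<Rightarrow> 'a set \<Rightarrow> 'a set set" where
  "Vz A I = {P \<in> gspec A. I \<subseteq> P}"

definition zariski_closure :: "'a gring \<Rightarrow> 'a set set \<Rightarrow> 'a set set" where
  "zariski_closure A S = gspec A \<inter> \<Inter>{Vz A I | I. I \<subseteq> carr A {1} \<and> S \<subseteq> Vz A I}"

definition hpre :: "'a gring \<Rightarrow> (nat set \<Rightarrow> 'a \<Rightarrow> 'b) \<Rightarrow> 'b set \<Rightarrow> 'a set" where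
  "hpre A \<phi> Q = {a \<in> carr A {1}. \<phi> {1} a \<in> Q}"

end

theory Submission
  imports Defs
begin

declare One_nat_def [simp del]

lemma gr_empty: "gring A \<Longrightarrow> carr A {} = {zer A {}}" 
  by (rule gring_def[THEN iffD1, THEN conjunct1]) (rule conjI | assumption)+
lemma gr_tr: "gring A \<Longrightarrow> finite X \<Longrightarrow> finite Y \<Longrightarrow> pbij X Y f \<Longrightarrow> a \<in> carr A X \<Longrightarrow> tr A X Y f a \<in> carr A Y"
  
  by (rule gring_def[THEN iffD1, THEN conjunct2, THEN conjunct2, THEN conjunct1, rule_format]) (rule conjI | assumption)+
lemma gr_tr_id: "gring A \<Longrightarrow> finite X \<Longrightarrow> a \<in> carr A X \<Longrightarrow> tr A X X (idm X) a = a"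
  
  by (rule gring_def[THEN iffD1, THEN conjunct2, THEN conjunct2, THEN conjunct2, THEN conjunct2, THEN conjunct1, rule_format]) (rule conjI | assumption)+
lemma gr_mul: "gring A \<Longrightarrow> finite X \<Longrightarrow> finite Y \<Longrightarrow> pmap X Y f \<Longrightarrow> a \<in> carr A Y \<Longrightarrow> b \<in> tup A Y f \<Longrightarrow> mul A X Y f a b \<in> carr A X"
  
  by (rule gring_def[THEN iffD1, THEN conjunct2, THEN conjunct2, THEN conjunct2, THEN conjunct2, THEN conjunct2, THEN conjunct2, THEN conjunct1, rule_format, THEN conjunct1]) (rule conjI | assumption)+
lemma gr_con: "gring A \<Longrightarrow> finite X \<Longrightarrow> finite Y \<Longrightarrow> pmap X Y f \<Longrightarrow> c \<in> carr A X \<Longrightarrow> b \<in> tup A Y f \<Longrightarrow> con A X Y f c b \<in> carr A Y"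
  
  by (rule gring_def[THEN iffD1, THEN conjunct2, THEN conjunct2, THEN conjunct2, THEN conjunct2, THEN conjunct2, THEN conjunct2, THEN conjunct2, THEN conjunct1, rule_format, THEN conjunct1]) (rule conjI | assumption)+
lemma gr_one: "gring A \<Longrightarrow> one A \<in> carr A {1}" 
  by (rule gring_def[THEN iffD1, THEN conjunct2, THEN conjunct2, THEN conjunct2, THEN conjunct2, THEN conjunct2, THEN conjunct2, THEN conjunct2, THEN conjunct2, THEN conjunct1]) (rule conjI | assumption)+
lemma gr_assoc1: "gring A \<Longrightarrow> finite W \<Longrightarrow> finite Z \<Longrightarrow> finite Y \<Longrightarrow> finite X \<Longrightarrow>
    pmap Z W h \<Longrightarrow> pmap Y Z g \<Longrightarrow> pmap X Y f \<Longrightarrow> d\<in>tup A W h \<Longrightarrow> c\<in>tup A Z g \<Longrightarrow> b\<in>tup A Y f \<Longrightarrow>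
    fmul A W h (g \<circ>\<^sub>m f) d (fmul A Z g f c b) = fmul A W (h \<circ>\<^sub>m g) f (fmul A W h g d c) b"
  
  by (rule gring_def[THEN iffD1, THEN conjunct2, THEN conjunct2, THEN conjunct2, THEN conjunct2, THEN conjunct2, THEN conjunct2, THEN conjunct2, THEN conjunct2, THEN conjunct2, THEN conjunct1, rule_format, THEN conjunct1, rule_format]) (rule conjI | assumption)+
lemma gr_ax2: "gring A \<Longrightarrow> finite W \<Longrightarrow> finite Z \<Longrightarrow> finite Y \<Longrightarrow> finite X \<Longrightarrow>
    pmap Z W h \<Longrightarrow> pmap Y Z g \<Longrightarrow> pmap X Y f \<Longrightarrow> d\<in>tup A W (h \<circ>\<^sub>m g \<circ>\<^sub>m f) \<Longrightarrow> a\<in>tup A Z g \<Longrightarrow> c\<in>tup A Y f \<Longrightarrow>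
          fcon A W h (g \<circ>\<^sub>m f) d (fmul A Z g f a c) = fcon A W h g (fcon A W (h \<circ>\<^sub>m g) f d c) a"
  
  by (rule gring_def[THEN iffD1, THEN conjunct2, THEN conjunct2, THEN conjunct2, THEN conjunct2, THEN conjunct2, THEN conjunct2, THEN conjunct2, THEN conjunct2, THEN conjunct2, THEN conjunct1, rule_format, THEN conjunct2, THEN conjunct1, rule_format]) (rule conjI | assumption)+
lemma gr_ax3: "gring A \<Longrightarrow> finite W \<Longrightarrow> finite Z \<Longrightarrow> finite Y \<Longrightarrow> finite X \<Longrightarrow>
    pmap Z W h \<Longrightarrow> pmap Y Z g \<Longrightarrow> pmap X Y f \<Longrightarrow> d\<in>tup A W (h \<circ>\<^sub>m g) \<Longrightarrow> a\<in>tup A Z (g \<circ>\<^sub>m f) \<Longrightarrow> c\<in>tup A Y f \<Longrightarrow>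
          fcon A W h (g \<circ>\<^sub>m f) (fmul A W (h \<circ>\<^sub>m g) f d c) a = fcon A W h g d (fcon A Z g f a c)"
  
  by (rule gring_def[THEN iffD1, THEN conjunct2, THEN conjunct2, THEN conjunct2, THEN conjunct2, THEN conjunct2, THEN conjunct2, THEN conjunct2, THEN conjunct2, THEN conjunct2, THEN conjunct1, rule_format, THEN conjunct2, THEN conjunct2, THEN conjunct1, rule_format]) (rule conjI | assumption)+
lemma gr_ax4: "gring A \<Longrightarrow> finite W \<Longrightarrow> finite Z \<Longrightarrow> finite Y \<Longrightarrow> finite X \<Longrightarrow>
    pmap Z W h \<Longrightarrow> pmap Y Z g \<Longrightarrow> pmap X Y f \<Longrightarrow> d\<in>tup A W h \<Longrightarrow> a\<in>tup A Z (g \<circ>\<^sub>m f) \<Longrightarrow> c\<in>tup A Y f \<Longrightarrow>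
          fcon A W (h \<circ>\<^sub>m g) f (fmul A W h (g \<circ>\<^sub>m f) d a) c = fmul A W h g d (fcon A Z g f a c)"
  
  by (rule gring_def[THEN iffD1, THEN conjunct2, THEN conjunct2, THEN conjunct2, THEN conjunct2, THEN conjunct2, THEN conjunct2, THEN conjunct2, THEN conjunct2, THEN conjunct2, THEN conjunct1, rule_format, THEN conjunct2, THEN conjunct2, THEN conjunct2, rule_format]) (rule conjI | assumption)+
lemma gr_pb: "gring A \<Longrightarrow> finite Z \<Longrightarrow> finite Y \<Longrightarrow> finite X \<Longrightarrow> finite W \<Longrightarrow>
        pmap Z Y g \<Longrightarrow> pmap X Y f \<Longrightarrow> pmap Y W h \<Longrightarrow> d\<in>tup A W (h \<circ>\<^sub>m f) \<Longrightarrow> a\<in>tup A Y g \<Longrightarrow> c\<in>tup A Y f \<Longrightarrow>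
          fmul A W h g (fcon A W h f d c) a =
          fcon A W (h \<circ>\<^sub>m g) (pbf g f) (fmul A W (h \<circ>\<^sub>m f) (pbg g f) d (pb_a A g f X a)) (pb_c A g f Z c)"
  
  by (rule gring_def[THEN iffD1, THEN conjunct2, THEN conjunct2, THEN conjunct2, THEN conjunct2, THEN conjunct2, THEN conjunct2, THEN conjunct2, THEN conjunct2, THEN conjunct2, THEN conjunct2, THEN conjunct1, rule_format]) (rule conjI | assumption)+
lemma gr_unit1: "gring A \<Longrightarrow> finite X \<Longrightarrow> finite Y \<Longrightarrow> pmap X Y f \<Longrightarrow> a\<in>tup A Y f \<Longrightarrow>
          fmul A Y f (idm X) a (unit_pb A X (idm X)) = a"
  
  by (rule gring_def[THEN iffD1, THEN conjunct2, THEN conjunct2, THEN conjunct2, THEN conjunct2, THEN conjunct2, THEN conjunct2, THEN conjunct2, THEN conjunct2, THEN conjunct2, THEN conjunct2, THEN conjunct2, THEN conjunct1, rule_format, THEN conjunct1]) (rule conjI | assumption)+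
lemma gr_unit2: "gring A \<Longrightarrow> finite X \<Longrightarrow> finite Y \<Longrightarrow> pmap X Y f \<Longrightarrow> a\<in>tup A Y f \<Longrightarrow>
          fmul A Y (idm Y) f (unit_pb A Y (idm Y)) a = a"
  
  by (rule gring_def[THEN iffD1, THEN conjunct2, THEN conjunct2, THEN conjunct2, THEN conjunct2, THEN conjunct2, THEN conjunct2, THEN conjunct2, THEN conjunct2, THEN conjunct2, THEN conjunct2, THEN conjunct2, THEN conjunct1, rule_format, THEN conjunct2, THEN conjunct1]) (rule conjI | assumption)+
lemma gr_unit3: "gring A \<Longrightarrow> finite X \<Longrightarrow> finite Y \<Longrightarrow> pmap X Y f \<Longrightarrow> a\<in>tup A Y f \<Longrightarrow>
          fcon A Y f (idm X) a (unit_pb A X (idm X)) = a"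
  
  by (rule gring_def[THEN iffD1, THEN conjunct2, THEN conjunct2, THEN conjunct2, THEN conjunct2, THEN conjunct2, THEN conjunct2, THEN conjunct2, THEN conjunct2, THEN conjunct2, THEN conjunct2, THEN conjunct2, THEN conjunct1, rule_format, THEN conjunct2, THEN conjunct2]) (rule conjI | assumption)+
lemma gr_ptr: "gring A \<Longrightarrow> finite X \<Longrightarrow> finite Y \<Longrightarrow> pbij X Y f \<Longrightarrow> a\<in>carr A X \<Longrightarrow>
          mul A Y X (ptr f) a (unit_pb A X (ptr f)) = tr A X Y f a"
  
  by (rule gring_def[THEN iffD1, THEN conjunct2, THEN conjunct2, THEN conjunct2, THEN conjunct2, THEN conjunct2, THEN conjunct2, THEN conjunct2, THEN conjunct2, THEN conjunct2, THEN conjunct2, THEN conjunct2, THEN conjunct2, rule_format, THEN conjunct1]) (rule conjI | assumption)+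
lemma gr_trcon: "gring A \<Longrightarrow> finite X \<Longrightarrow> finite Y \<Longrightarrow> pbij X Y f \<Longrightarrow> a\<in>carr A X \<Longrightarrow>
          con A X Y f a (unit_pb A Y f) = tr A X Y f a"
  
  by (rule gring_def[THEN iffD1, THEN conjunct2, THEN conjunct2, THEN conjunct2, THEN conjunct2, THEN conjunct2, THEN conjunct2, THEN conjunct2, THEN conjunct2, THEN conjunct2, THEN conjunct2, THEN conjunct2, THEN conjunct2, rule_format, THEN conjunct2]) (rule conjI | assumption)+

lemma hm_carr: "ghom A B \<phi> \<Longrightarrow> finite X \<Longrightarrow> a \<in> carr A X \<Longrightarrow> \<phi> X a \<in> carr B X"
  by (rule ghom_def[THEN iffD1, THEN conjunct1, rule_format, THEN conjunct1, rule_format]) (rule conjI | assumption)+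
lemma hm_mul: "ghom A B \<phi> \<Longrightarrow> finite X \<Longrightarrow> finite Y \<Longrightarrow> pmap X Y f \<Longrightarrow> a \<in> carr A Y \<Longrightarrow> b \<in> tup A Y f \<Longrightarrow>
        \<phi> X (mul A X Y f a b) = mul B X Y f (\<phi> Y a) (htup \<phi> Y f b)"
  by (rule ghom_def[THEN iffD1, THEN conjunct2, THEN conjunct1, rule_format]) (rule conjI | assumption)+
lemma hm_con: "ghom A B \<phi> \<Longrightarrow> finite X \<Longrightarrow> finite Y \<Longrightarrow> pmap X Y f \<Longrightarrow> c \<in> carr A X \<Longrightarrow> b \<in> tup A Y f \<Longrightarrow>
        \<phi> Y (con A X Y f c b) = con B X Y f (\<phi> X c) (htup \<phi> Y f b)"
  by (rule ghom_def[THEN iffD1, THEN conjunct2, THEN conjunct2, THEN conjunct1, rule_format]) (rule conjI | assumption)+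
lemma hm_one: "ghom A B \<phi> \<Longrightarrow> \<phi> {1} (one A) = one B"
  by (rule ghom_def[THEN iffD1, THEN conjunct2, THEN conjunct2, THEN conjunct2]) assumption

lemma idm_sing: "idm {a} = [a \<mapsto> a]" by (auto simp: idm_def)
lemma pmap_sing: "pmap {a} {b} [a \<mapsto> b]" by (auto simp: pmap_def)
lemma pbij_sing: "pbij {a} {b} [a \<mapsto> b]" by (auto simp: pbij_def pmap_def)
lemma fib_sing: "fib [a \<mapsto> b] b = {a}" by (auto simp: fib_def)
lemma comp_sing: "[b \<mapsto> c] \<circ>\<^sub>m [a \<mapsto> b] = [a \<mapsto> c]" by (auto simp: map_comp_def)
lemma restr_sing: "[a \<mapsto> b] |` {a} = [a \<mapsto> b]" by (auto simp: restrict_map_def)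
lemma ptr_sing: "ptr [a \<mapsto> b] = [b \<mapsto> a]" by (auto simp: ptr_def)
lemma tup_sing: "restrict (\<lambda>_. v) {y} \<in> tup A {y} f \<longleftrightarrow> v \<in> carr A (fib f y)" by (auto simp: tup_def)
lemma restrict_sing_eq: "restrict F {a} = restrict (\<lambda>_. F a) {a}" by auto
lemma fmul_at: "z \<in> Z \<Longrightarrow> fmul A Z g f a b z = mul A (fib (g \<circ>\<^sub>m f) z) (fib g z) (f |` fib (g \<circ>\<^sub>m f) z) (a z) (restrict b (fib g z))"
  by (simp add: fmul_def)
lemma fcon_at: "z \<in> Z \<Longrightarrow> fcon A Z g f a b z = con A (fib (g \<circ>\<^sub>m f) z) (fib g z) (f |` fib (g \<circ>\<^sub>m f) z) (a z) (restrict b (fib g z))"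
  by (simp add: fcon_def)

lemma unit_at1: "gring A \<Longrightarrow> unit_at A 1 = one A"
  unfolding unit_at_def idm_sing[symmetric] by (rule gr_tr_id) (assumption | rule gr_one | simp)+
lemma unit_pb_sing: "gring A \<Longrightarrow> unit_pb A {q} [a \<mapsto> q] = restrict (\<lambda>_. unit_at A a) {q}"
  by (auto simp: unit_pb_def)
lemma unit_at_carr: "gring A \<Longrightarrow> unit_at A x \<in> carr A {x}"
  unfolding unit_at_def by (rule gr_tr) (assumption | rule gr_one pbij_sing | simp)+

lemma fib_sing': "fib [a \<mapsto> b] c = (if c = b then {a} else {})" by (auto simp: fib_def)
lemma comp_sing': "[b \<mapsto> c] \<circ>\<^sub>m [a \<mapsto> b'] = (if b = b' then [a \<mapsto> c] else Map.empty)" by (auto simp: map_comp_def)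
lemma restr_sing': "[a \<mapsto> b] |` {a} = [a \<mapsto> b]" by (auto simp: restrict_map_def)
lemma unit_pb_sing': "unit_pb A {q} [a \<mapsto> q] = restrict (\<lambda>_. unit_at A a) {q}"
  by (auto simp: unit_pb_def)
lemmas sing_simps = fib_sing' comp_sing' restr_sing' unit_pb_sing' idm_sing ptr_sing


abbreviation sm :: "nat \<Rightarrow> nat \<Rightarrow> nat \<Rightarrow> nat option" where "sm a b \<equiv> [a \<mapsto> b]"

lemma N3: assumes G: "gring A" and b: "b \<in> carr A {1}"
  shows "mul A {1} {r} (sm 1 r) (unit_at A r) (restrict (\<lambda>_. b) {r}) = b"
proof -
  have a: "restrict (\<lambda>_. b) {r} \<in> tup A {r} (sm 1 r)" using b by (simp add: tup_sing fib_sing)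
  have "fmul A {r} (idm {r}) (sm 1 r) (unit_pb A {r} (idm {r})) (restrict (\<lambda>_. b) {r}) = restrict (\<lambda>_. b) {r}"
    by (rule gr_unit2[OF G _ _ pmap_sing a]) simp_all
  from fun_cong[OF this, of r] show ?thesis
    by (simp add: fmul_at sing_simps)
qed

lemma N4: assumes G: "gring A" and b: "v \<in> carr A {p}"
  shows "mul A {p} {p} (sm p p) (unit_at A p) (restrict (\<lambda>_. v) {p}) = v"
proof -
  have a: "restrict (\<lambda>_. v) {p} \<in> tup A {p} (sm p p)" using b by (simp add: tup_sing fib_sing)
  have "fmul A {p} (idm {p}) (sm p p) (unit_pb A {p} (idm {p})) (restrict (\<lambda>_. v) {p}) = restrict (\<lambda>_. v) {p}"
    by (rule gr_unit2[OF G _ _ pmap_sing a]) simp_all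
  from fun_cong[OF this, of p] show ?thesis
    by (simp add: fmul_at sing_simps)
qed

lemma tr_as_mul: assumes G: "gring A" and a: "a \<in> carr A {1}"
  shows "tr A {1} {r} (sm 1 r) a = mul A {r} {1} (sm r 1) a (restrict (\<lambda>_. unit_at A r) {1})"
  using gr_ptr[OF G _ _ pbij_sing a, of r] by (simp add: sing_simps)

lemma tr_as_con: assumes G: "gring A" and a: "a \<in> carr A {1}"
  shows "tr A {1} {r} (sm 1 r) a = con A {1} {r} (sm 1 r) a (restrict (\<lambda>_. one A) {r})"
  using gr_trcon[OF G _ _ pbij_sing a, of r] by (simp add: sing_simps unit_at1[OF G])

lemma N2: assumes G: "gring A" and a: "a \<in> carr A {1}" and b: "b \<in> carr A {1}"
  shows "mul A {1} {r} (sm 1 r) (tr A {1} {r} (sm 1 r) a) (restrict (\<lambda>_. b) {r}) = mul1 A a b"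
proof -
  have d: "restrict (\<lambda>_. a) {1} \<in> tup A {1} (sm 1 1)" using a by (simp add: tup_sing fib_sing)
  have c: "restrict (\<lambda>_. unit_at A r) {1} \<in> tup A {1} (sm r 1)" using unit_at_carr[OF G] by (simp add: tup_sing fib_sing)
  have bb: "restrict (\<lambda>_. b) {r} \<in> tup A {r} (sm 1 r)" using b by (simp add: tup_sing fib_sing)
  have E: "fmul A {1} (sm 1 1) ((sm r 1) \<circ>\<^sub>m (sm 1 r)) (restrict (\<lambda>_. a) {1}) (fmul A {1} (sm r 1) (sm 1 r) (restrict (\<lambda>_. unit_at A r) {1}) (restrict (\<lambda>_. b) {r}))
     = fmul A {1} ((sm 1 1) \<circ>\<^sub>m (sm r 1)) (sm 1 r) (fmul A {1} (sm 1 1) (sm r 1) (restrict (\<lambda>_. a) {1}) (restrict (\<lambda>_. unit_at A r) {1})) (restrict (\<lambda>_. b) {r})"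
    by (rule gr_assoc1[OF G _ _ _ _ pmap_sing pmap_sing pmap_sing d c bb]) simp_all
  have in1: "fmul A {1} (sm r 1) (sm 1 r) (restrict (\<lambda>_. unit_at A r) {1}) (restrict (\<lambda>_. b) {r}) = restrict (\<lambda>_. b) {1}"
    by (rule ext) (simp add: fmul_def sing_simps N3[OF G b])
  have in2: "fmul A {1} (sm 1 1) (sm r 1) (restrict (\<lambda>_. a) {1}) (restrict (\<lambda>_. unit_at A r) {1}) = restrict (\<lambda>_. tr A {1} {r} (sm 1 r) a) {1}"
    by (rule ext) (simp add: fmul_def sing_simps tr_as_mul[OF G a])
  from fun_cong[OF E, of 1] show ?thesis
    unfolding in1 in2 by (simp add: fmul_def sing_simps mul1_def)
qed

lemma N1: assumes G: "gring A" and dl: "dl \<in> carr A {r}" and a: "a \<in> carr A {1}"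
  shows "mul A {q} {r} (sm q r) dl (restrict (\<lambda>_. tr A {1} {q} (sm 1 q) a) {r}) = tr A {1} {q} (sm 1 q) (mul A {1} {r} (sm 1 r) dl (restrict (\<lambda>_. a) {r}))"
proof -
  have d: "restrict (\<lambda>_. dl) {1} \<in> tup A {1} (sm r 1)" using dl by (simp add: tup_sing fib_sing)
  have aa: "restrict (\<lambda>_. a) {r} \<in> tup A {r} (sm q r \<circ>\<^sub>m sm 1 q)" using a by (simp add: tup_sing sing_simps)
  have c: "restrict (\<lambda>_. one A) {q} \<in> tup A {q} (sm 1 q)" using gr_one[OF G] by (simp add: tup_sing fib_sing)
  have E: "fcon A {1} (sm r 1 \<circ>\<^sub>m sm q r) (sm 1 q) (fmul A {1} (sm r 1) (sm q r \<circ>\<^sub>m sm 1 q) (restrict (\<lambda>_. dl) {1}) (restrict (\<lambda>_. a) {r})) (restrict (\<lambda>_. one A) {q})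
     = fmul A {1} (sm r 1) (sm q r) (restrict (\<lambda>_. dl) {1}) (fcon A {r} (sm q r) (sm 1 q) (restrict (\<lambda>_. a) {r}) (restrict (\<lambda>_. one A) {q}))"
    by (rule gr_ax4[OF G _ _ _ _ pmap_sing pmap_sing pmap_sing d aa c]) simp_all
  have M: "mul A {1} {r} (sm 1 r) dl (restrict (\<lambda>_. a) {r}) \<in> carr A {1}"
    by (rule gr_mul[OF G _ _ pmap_sing dl]) (simp_all add: tup_sing fib_sing a)
  have in1: "fmul A {1} (sm r 1) (sm q r \<circ>\<^sub>m sm 1 q) (restrict (\<lambda>_. dl) {1}) (restrict (\<lambda>_. a) {r}) = restrict (\<lambda>_. mul A {1} {r} (sm 1 r) dl (restrict (\<lambda>_. a) {r})) {1}"
    by (rule ext) (simp add: fmul_def sing_simps)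
  have in2: "fcon A {r} (sm q r) (sm 1 q) (restrict (\<lambda>_. a) {r}) (restrict (\<lambda>_. one A) {q}) = restrict (\<lambda>_. tr A {1} {q} (sm 1 q) a) {r}"
    by (rule ext) (simp add: fcon_def sing_simps tr_as_con[OF G a])
  from fun_cong[OF E, of 1] show ?thesis
    unfolding in1 in2 by (simp add: fcon_def fmul_def sing_simps tr_as_con[OF G M])
qed

abbreviation con1 :: "'a gring \<Rightarrow> 'a \<Rightarrow> 'a \<Rightarrow> 'a" where
  "con1 A a b \<equiv> con A {1} {1} (idm {1}) a (restrict (\<lambda>_. b) {1})"

lemma U1: assumes G: "gring A" and a: "a \<in> carr A {1}" shows "mul1 A a (one A) = a"
proof -
  have aa: "restrict (\<lambda>_. a) {1} \<in> tup A {1} (idm {1})" using a by (simp add: tup_sing sing_simps)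
  have "fmul A {1} (idm {1}) (idm {1}) (restrict (\<lambda>_. a) {1}) (unit_pb A {1} (idm {1})) = restrict (\<lambda>_. a) {1}"
    by (rule gr_unit1[OF G _ _ _ aa]) (simp_all add: sing_simps pmap_sing)
  from fun_cong[OF this, of 1] show ?thesis
    by (simp add: fmul_at sing_simps mul1_def unit_at1[OF G])
qed

lemma U2: assumes G: "gring A" and a: "a \<in> carr A {1}" shows "mul1 A (one A) a = a"
  using N3[OF G a, of 1] by (simp add: unit_at1[OF G] mul1_def sing_simps)

lemma U3: assumes G: "gring A" and a: "a \<in> carr A {1}" shows "con1 A a (one A) = a"
proof -
  have aa: "restrict (\<lambda>_. a) {1} \<in> tup A {1} (idm {1})" using a by (simp add: tup_sing sing_simps)
  have "fcon A {1} (idm {1}) (idm {1}) (restrict (\<lambda>_. a) {1}) (unit_pb A {1} (idm {1})) = restrict (\<lambda>_. a) {1}"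
    by (rule gr_unit3[OF G _ _ _ aa]) (simp_all add: sing_simps pmap_sing)
  from fun_cong[OF this, of 1] show ?thesis
    by (simp add: fcon_at sing_simps unit_at1[OF G])
qed

lemma mul1_carr: assumes G: "gring A" and a: "a \<in> carr A {1}" and b: "b \<in> carr A {1}" shows "mul1 A a b \<in> carr A {1}"
  unfolding mul1_def idm_sing by (rule gr_mul[OF G _ _ pmap_sing a]) (simp_all add: tup_sing fib_sing b)

lemma con1_carr: assumes G: "gring A" and a: "a \<in> carr A {1}" and b: "b \<in> carr A {1}" shows "con1 A a b \<in> carr A {1}"
  unfolding idm_sing by (rule gr_con[OF G _ _ pmap_sing a]) (simp_all add: tup_sing fib_sing b)

lemma A4: assumes G: "gring A" and d: "d \<in> carr A {1}" and a: "a \<in> carr A {1}" and c: "c \<in> carr A {1}"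
  shows "con1 A (mul1 A d a) c = mul1 A d (con1 A a c)"
proof -
  have dd: "restrict (\<lambda>_. d) {1} \<in> tup A {1} (sm 1 1)" using d by (simp add: tup_sing fib_sing)
  have aa: "restrict (\<lambda>_. a) {1} \<in> tup A {1} (sm 1 1 \<circ>\<^sub>m sm 1 1)" using a by (simp add: tup_sing sing_simps)
  have cc: "restrict (\<lambda>_. c) {1} \<in> tup A {1} (sm 1 1)" using c by (simp add: tup_sing fib_sing)
  have E: "fcon A {1} (sm 1 1 \<circ>\<^sub>m sm 1 1) (sm 1 1) (fmul A {1} (sm 1 1) (sm 1 1 \<circ>\<^sub>m sm 1 1) (restrict (\<lambda>_. d) {1}) (restrict (\<lambda>_. a) {1})) (restrict (\<lambda>_. c) {1})
     = fmul A {1} (sm 1 1) (sm 1 1) (restrict (\<lambda>_. d) {1}) (fcon A {1} (sm 1 1) (sm 1 1) (restrict (\<lambda>_. a) {1}) (restrict (\<lambda>_. c) {1}))"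
    by (rule gr_ax4[OF G _ _ _ _ pmap_sing pmap_sing pmap_sing dd aa cc]) simp_all
  have in1: "fmul A {1} (sm 1 1) (sm 1 1 \<circ>\<^sub>m sm 1 1) (restrict (\<lambda>_. d) {1}) (restrict (\<lambda>_. a) {1}) = restrict (\<lambda>_. mul1 A d a) {1}"
    by (rule ext) (simp add: fmul_def sing_simps mul1_def)
  have in2: "fcon A {1} (sm 1 1) (sm 1 1) (restrict (\<lambda>_. a) {1}) (restrict (\<lambda>_. c) {1}) = restrict (\<lambda>_. con1 A a c) {1}"
    by (rule ext) (simp add: fcon_def sing_simps)
  from fun_cong[OF E, of 1] show ?thesis
    unfolding in1 in2 by (simp add: fcon_def fmul_def sing_simps mul1_def)
qed

lemma A3: assumes G: "gring A" and d: "d \<in> carr A {1}" and a: "a \<in> carr A {1}" and c: "c \<in> carr A {1}"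
  shows "con1 A (mul1 A d c) a = con1 A d (con1 A a c)"
proof -
  have dd: "restrict (\<lambda>_. d) {1} \<in> tup A {1} (sm 1 1 \<circ>\<^sub>m sm 1 1)" using d by (simp add: tup_sing sing_simps)
  have aa: "restrict (\<lambda>_. a) {1} \<in> tup A {1} (sm 1 1 \<circ>\<^sub>m sm 1 1)" using a by (simp add: tup_sing sing_simps)
  have cc: "restrict (\<lambda>_. c) {1} \<in> tup A {1} (sm 1 1)" using c by (simp add: tup_sing fib_sing)
  have E: "fcon A {1} (sm 1 1) (sm 1 1 \<circ>\<^sub>m sm 1 1) (fmul A {1} (sm 1 1 \<circ>\<^sub>m sm 1 1) (sm 1 1) (restrict (\<lambda>_. d) {1}) (restrict (\<lambda>_. c) {1})) (restrict (\<lambda>_. a) {1})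
     = fcon A {1} (sm 1 1) (sm 1 1) (restrict (\<lambda>_. d) {1}) (fcon A {1} (sm 1 1) (sm 1 1) (restrict (\<lambda>_. a) {1}) (restrict (\<lambda>_. c) {1}))"
    by (rule gr_ax3[OF G _ _ _ _ pmap_sing pmap_sing pmap_sing dd aa cc]) simp_all
  have in1: "fmul A {1} (sm 1 1 \<circ>\<^sub>m sm 1 1) (sm 1 1) (restrict (\<lambda>_. d) {1}) (restrict (\<lambda>_. c) {1}) = restrict (\<lambda>_. mul1 A d c) {1}"
    by (rule ext) (simp add: fmul_def sing_simps mul1_def)
  have in2: "fcon A {1} (sm 1 1) (sm 1 1) (restrict (\<lambda>_. a) {1}) (restrict (\<lambda>_. c) {1}) = restrict (\<lambda>_. con1 A a c) {1}"
    by (rule ext) (simp add: fcon_def sing_simps)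
  from fun_cong[OF E, of 1] show ?thesis
    unfolding in1 in2 by (simp add: fcon_def sing_simps)
qed

lemma N5: assumes G: "gring A" and v: "v \<in> carr A {1}" and c0: "c0 \<in> carr A {1}"
  shows "con A {p} {1} (sm p 1) (tr A {1} {p} (sm 1 p) v) (restrict (\<lambda>_. tr A {1} {p} (sm 1 p) c0) {1}) = con1 A v c0"
proof -
  have trc: "tr A {1} {p} (sm 1 p) c0 \<in> carr A {p}" by (rule gr_tr[OF G _ _ pbij_sing c0]) simp_all
  have dd: "restrict (\<lambda>_. v) {1} \<in> tup A {1} (sm 1 1 \<circ>\<^sub>m sm p 1 \<circ>\<^sub>m sm 1 p)" using v by (simp add: tup_sing sing_simps)
  have aa: "restrict (\<lambda>_. tr A {1} {p} (sm 1 p) c0) {1} \<in> tup A {1} (sm p 1)" using trc by (simp add: tup_sing sing_simps)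
  have cc: "restrict (\<lambda>_. one A) {p} \<in> tup A {p} (sm 1 p)" using gr_one[OF G] by (simp add: tup_sing fib_sing)
  have E: "fcon A {1} (sm 1 1) (sm p 1 \<circ>\<^sub>m sm 1 p) (restrict (\<lambda>_. v) {1}) (fmul A {1} (sm p 1) (sm 1 p) (restrict (\<lambda>_. tr A {1} {p} (sm 1 p) c0) {1}) (restrict (\<lambda>_. one A) {p}))
     = fcon A {1} (sm 1 1) (sm p 1) (fcon A {1} (sm 1 1 \<circ>\<^sub>m sm p 1) (sm 1 p) (restrict (\<lambda>_. v) {1}) (restrict (\<lambda>_. one A) {p})) (restrict (\<lambda>_. tr A {1} {p} (sm 1 p) c0) {1})"
    by (rule gr_ax2[OF G _ _ _ _ pmap_sing pmap_sing pmap_sing dd aa cc]) simp_all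
  have in1: "fmul A {1} (sm p 1) (sm 1 p) (restrict (\<lambda>_. tr A {1} {p} (sm 1 p) c0) {1}) (restrict (\<lambda>_. one A) {p}) = restrict (\<lambda>_. c0) {1}"
    by (rule ext) (simp add: fmul_def sing_simps N2[OF G c0 gr_one[OF G]] U1[OF G c0])
  have in2: "fcon A {1} (sm 1 1 \<circ>\<^sub>m sm p 1) (sm 1 p) (restrict (\<lambda>_. v) {1}) (restrict (\<lambda>_. one A) {p}) = restrict (\<lambda>_. tr A {1} {p} (sm 1 p) v) {1}"
    by (rule ext) (simp add: fcon_def sing_simps tr_as_con[OF G v])
  from fun_cong[OF E, of 1] show ?thesis
    unfolding in1 in2 by (simp add: fcon_def sing_simps)
qed



definition PX :: "nat set \<Rightarrow> nat set" where "PX X = (\<lambda>x. prod_encode (1, x)) ` X"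
definition io :: "nat set \<Rightarrow> nat \<Rightarrow> nat option" where "io X = (\<lambda>x. if x \<in> X then Some (prod_encode (1, x)) else None)"
definition pg :: "nat set \<Rightarrow> nat \<Rightarrow> nat option" where "pg X = (\<lambda>p. if p \<in> PX X then Some (snd (prod_decode p)) else None)"

lemma PX_mem: "p \<in> PX X \<longleftrightarrow> (\<exists>x\<in>X. p = prod_encode (1, x))" by (auto simp: PX_def)
lemma PX_enc: "prod_encode (1, x) \<in> PX X \<longleftrightarrow> x \<in> X" by (auto simp: PX_def)
lemma PX_fin: "finite X \<Longrightarrow> finite (PX X)" by (simp add: PX_def)
lemma PX_sing: "PX {x} = {prod_encode (1, x)}" by (simp add: PX_def)

lemma L1: "pb (sm 1 1) (cmap X) = PX X"
proof -
  have "pb (sm 1 1) (cmap X) = prod_encode ` {(z, x). z \<in> dom (sm 1 1) \<and> x \<in> dom (cmap X) \<and> sm 1 1 z = cmap X x}"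
    by (rule pb_def)
  also have "{(z, x). z \<in> dom (sm 1 1) \<and> x \<in> dom (cmap X) \<and> sm 1 1 z = cmap X x} = {1} \<times> X"
    by (auto simp: cmap_def split: if_splits)
  also have "prod_encode ` ({1} \<times> X) = PX X" by (auto simp: PX_def)
  finally show ?thesis .
qed
lemma L2: "pbf (sm 1 1) (cmap X) = cmap (PX X)"
  unfolding pbf_def L1 by (rule ext) (auto simp: cmap_def PX_def)
lemma L3: "pbg (sm 1 1) (cmap X) = pg X"
  unfolding pbg_def L1 pg_def by (rule refl)
lemma fib_pg: "x \<in> X \<Longrightarrow> fib (pg X) x = {prod_encode (1, x)}"
  by (auto simp: fib_def pg_def PX_def)
lemma fib_cmap: "fib (cmap X) 1 = X" by (auto simp: fib_def cmap_def)
lemma fib_idm: "x \<in> X \<Longrightarrow> fib (idm X) x = {x}" by (auto simp: fib_def idm_def)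
lemma L4: "pb_a A (sm 1 1) (cmap X) X a = restrict (\<lambda>x. tr A {1} {prod_encode (1, x)} (sm 1 (prod_encode (1, x))) (a 1)) X"
proof (rule ext)
  fix x show "pb_a A (sm 1 1) (cmap X) X a x = restrict (\<lambda>x. tr A {1} {prod_encode (1, x)} (sm 1 (prod_encode (1, x))) (a 1)) X x"
  proof (cases "x \<in> X")
    case True
    have m: "(\<lambda>z. if z = 1 then Some (prod_encode (z, x)) else None) = sm 1 (prod_encode (1, x))"
      by (rule ext) auto
    show ?thesis using True unfolding pb_a_def L3
      by (simp add: fib_pg sing_simps cmap_def m domIff)
  qed (simp add: pb_a_def)
qed
lemma L5: "pb_c A (sm 1 1) (cmap X) {1} c = restrict (\<lambda>_. tr A X (PX X) (io X) (c 1)) {1}"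
proof (rule ext)
  fix z show "pb_c A (sm 1 1) (cmap X) {1} c z = restrict (\<lambda>_. tr A X (PX X) (io X) (c 1)) {1} z"
  proof (cases "z = 1")
    case True
    have m: "(\<lambda>x. if x \<in> fib (cmap X) 1 then Some (prod_encode (1, x)) else None) = io X"
      by (rule ext) (auto simp: io_def fib_cmap)
    have f: "fib (cmap (PX X)) 1 = PX X" by (rule fib_cmap)
    show ?thesis using True unfolding pb_c_def L2
      by (simp add: fib_cmap f m io_def)
  qed (simp add: pb_c_def)
qed

lemma cmap_sing: "cmap {1} = sm 1 1" by (rule ext) (simp add: cmap_def)
lemma cmap_sing': "cmap {p} = sm p 1" by (rule ext) (simp add: cmap_def)
lemma pg_sing: "pg {1} = sm (prod_encode (1,1)) 1" by (rule ext) (auto simp: pg_def PX_def)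
lemma io_sing: "io {1} = sm 1 (prod_encode (1,1))" by (rule ext) (auto simp: io_def)

lemma PB: assumes G: "gring A" and d: "d \<in> carr A {1}" and a: "a \<in> carr A {1}" and c: "c \<in> carr A {1}"
  shows "mul1 A (con1 A d c) a = con1 A (mul1 A d a) c"
proof -
  define p where "p = prod_encode (1::nat, 1::nat)"
  have S1: "pbf (sm 1 1) (sm 1 1) = sm p 1" using L2[of "{1}"] by (simp add: cmap_sing PX_sing cmap_sing' p_def)
  have S2: "pbg (sm 1 1) (sm 1 1) = sm p 1" using L3[of "{1}"] by (simp add: cmap_sing pg_sing p_def)
  have S3: "pb_a A (sm 1 1) (sm 1 1) {1} aa = restrict (\<lambda>_. tr A {1} {p} (sm 1 p) (aa 1)) {1}" for aa
    using L4[of A "{1}" aa] by (intro ext) (simp add: cmap_sing p_def)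
  have S4: "pb_c A (sm 1 1) (sm 1 1) {1} cc = restrict (\<lambda>_. con A {1} {p} (sm 1 p) (cc 1) (restrict (\<lambda>_. one A) {p})) {1}" if "cc 1 \<in> carr A {1}" for cc
    using L5[of A "{1}" cc] tr_as_con[OF G that, of p] by (simp add: cmap_sing PX_sing io_sing p_def)
  have dd: "restrict (\<lambda>_. d) {1} \<in> tup A {1} (sm 1 1 \<circ>\<^sub>m sm 1 1)" using d by (simp add: tup_sing sing_simps)
  have aa: "restrict (\<lambda>_. a) {1} \<in> tup A {1} (sm 1 1)" using a by (simp add: tup_sing sing_simps)
  have cc: "restrict (\<lambda>_. c) {1} \<in> tup A {1} (sm 1 1)" using c by (simp add: tup_sing sing_simps)
  have E: "fmul A {1} (sm 1 1) (sm 1 1) (fcon A {1} (sm 1 1) (sm 1 1) (restrict (\<lambda>_. d) {1}) (restrict (\<lambda>_. c) {1})) (restrict (\<lambda>_. a) {1}) =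
          fcon A {1} (sm 1 1 \<circ>\<^sub>m sm 1 1) (pbf (sm 1 1) (sm 1 1)) (fmul A {1} (sm 1 1 \<circ>\<^sub>m sm 1 1) (pbg (sm 1 1) (sm 1 1)) (restrict (\<lambda>_. d) {1}) (pb_a A (sm 1 1) (sm 1 1) {1} (restrict (\<lambda>_. a) {1}))) (pb_c A (sm 1 1) (sm 1 1) {1} (restrict (\<lambda>_. c) {1}))"
    by (rule gr_pb[OF G _ _ _ _ pmap_sing pmap_sing pmap_sing dd aa cc]) simp_all
  have M: "mul1 A d a \<in> carr A {1}" by (rule mul1_carr[OF G d a])
  have in1: "fmul A {1} (sm 1 1 \<circ>\<^sub>m sm 1 1) (sm p 1) (restrict (\<lambda>_. d) {1}) (restrict (\<lambda>_. tr A {1} {p} (sm 1 p) a) {1})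
     = restrict (\<lambda>_. tr A {1} {p} (sm 1 p) (mul1 A d a)) {1}"
    by (rule ext) (simp add: fmul_def sing_simps N1[OF G d a] mul1_def)
  have in2: "fcon A {1} (sm 1 1) (sm 1 1) (restrict (\<lambda>_. d) {1}) (restrict (\<lambda>_. c) {1}) = restrict (\<lambda>_. con1 A d c) {1}"
    by (rule ext) (simp add: fcon_def sing_simps)
  from fun_cong[OF E, of 1] have "mul1 A (con1 A d c) a = con A {p} {1} (sm p 1) (tr A {1} {p} (sm 1 p) (mul1 A d a)) (restrict (\<lambda>_. tr A {1} {p} (sm 1 p) c) {1})"
    unfolding S1 S2 S3 S4[of "restrict (\<lambda>_. c) {1}", simplified, OF c] in2 in1 tr_as_con[OF G c, symmetric]
    by (simp add: fcon_def fmul_def sing_simps mul1_def N1[OF G d a])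
  also have "\<dots> = con1 A (mul1 A d a) c" by (rule N5[OF G M c])
  finally show ?thesis .
qed

lemma C1: assumes G: "gring A" and d: "d \<in> carr A {1}" and c: "c \<in> carr A {1}"
  shows "con1 A d c = mul1 A d (con1 A (one A) c)"
  using A4[OF G d gr_one[OF G] c] U1[OF G d] by simp
lemma C2: assumes G: "gring A" and c: "c \<in> carr A {1}"
  shows "con1 A (one A) (con1 A (one A) c) = c"
  using A3[OF G gr_one[OF G] gr_one[OF G] c] U2[OF G c] U3[OF G c] by simp
lemma comm: assumes G: "gring A" and x: "x \<in> carr A {1}" and a: "a \<in> carr A {1}"
  shows "mul1 A x a = mul1 A a x"
proof -
  define c where "c = con1 A (one A) x"
  have c: "c \<in> carr A {1}" unfolding c_def by (rule con1_carr[OF G gr_one[OF G] x])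
  have xc: "x = con1 A (one A) c" unfolding c_def using C2[OF G x] by simp
  have "mul1 A (con1 A (one A) c) a = con1 A (mul1 A (one A) a) c" by (rule PB[OF G gr_one[OF G] a c])
  also have "\<dots> = con1 A a c" using U2[OF G a] by simp
  also have "\<dots> = mul1 A a (con1 A (one A) c)" by (rule C1[OF G a c])
  finally show ?thesis using xc by simp
qed



abbreviation en :: "nat \<Rightarrow> nat" where "en x \<equiv> prod_encode (1::nat, x)"

lemma pmap_cmap: "pmap X {1} (cmap X)" by (auto simp: pmap_def cmap_def ran_def split: if_splits)
lemma pmap_idm: "pmap X X (idm X)" by (auto simp: pmap_def idm_def ran_def split: if_splits)
lemma pmap_pg: "pmap (PX X) X (pg X)" by (auto simp: pmap_def pg_def ran_def PX_def split: if_splits)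
lemma pbij_io: "pbij X (PX X) (io X)"
  by (auto simp: pbij_def pmap_def io_def ran_def PX_def inj_on_def dom_def split: if_splits)
lemma ptr_io: "ptr (io X) = pg X"
proof (rule ext)
  fix p show "ptr (io X) p = pg X p"
  proof (cases "p \<in> PX X")
    case True
    then obtain x where x: "x \<in> X" "p = en x" by (auto simp: PX_def)
    have r: "p \<in> ran (io X)" using x by (auto simp: ran_def io_def)
    have t: "(THE z. io X z = Some p) = x" using x by (auto simp: io_def split: if_splits)
    show ?thesis using True r t x by (simp add: ptr_def pg_def)
  next
    case False
    have r: "p \<notin> ran (io X)" using False by (auto simp: ran_def io_def PX_def split: if_splits)
    show ?thesis using False r by (simp add: ptr_def pg_def)
  qed
qed

lemma cmap_comp: "sm 1 1 \<circ>\<^sub>m cmap X = cmap X" by (rule ext) (simp add: map_comp_def cmap_def)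
lemma cmap_pg: "cmap X \<circ>\<^sub>m pg X = cmap (PX X)" by (rule ext) (auto simp: map_comp_def cmap_def pg_def PX_def)
lemma idm_pg: "idm X \<circ>\<^sub>m pg X = pg X" by (rule ext) (auto simp: map_comp_def idm_def pg_def PX_def)
lemma pg_idm: "pg X \<circ>\<^sub>m idm (PX X) = pg X" by (rule ext) (auto simp: map_comp_def idm_def pg_def)
lemma cmap_idm: "cmap X \<circ>\<^sub>m idm X = cmap X" by (rule ext) (auto simp: map_comp_def idm_def cmap_def)
lemma cmap_restr: "cmap X |` X = cmap X" by (rule ext) (auto simp: restrict_map_def cmap_def)
lemma idm_restr: "idm X |` X = idm X" by (rule ext) (auto simp: restrict_map_def idm_def)
lemma pg_restr: "pg X |` PX X = pg X" by (rule ext) (auto simp: restrict_map_def pg_def)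
lemma pg_restr1: "x \<in> X \<Longrightarrow> pg X |` {en x} = sm (en x) x" by (rule ext) (auto simp: restrict_map_def pg_def PX_def)
lemma idm_restr1: "p \<in> P \<Longrightarrow> idm P |` {p} = sm p p" by (rule ext) (auto simp: restrict_map_def idm_def)
lemma fib_sm11: "fib (sm 1 1) 1 = {1}" by (simp add: sing_simps)
lemma fib_cmapP: "fib (cmap (PX X)) 1 = PX X" by (rule fib_cmap)
lemma rr: "x \<in> X \<Longrightarrow> restrict (restrict F X) {x} = restrict (\<lambda>_. F x) {x}" by (rule ext) auto

lemmas col_simps = cmap_comp cmap_pg idm_pg pg_idm cmap_idm cmap_restr idm_restr pg_restr fib_sm11 fib_cmap fib_cmapP
   sing_simps

lemma unit_pb_pg: "unit_pb A X (pg X) = restrict (\<lambda>x. unit_at A (en x)) X"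
proof (rule ext)
  fix x show "unit_pb A X (pg X) x = restrict (\<lambda>x. unit_at A (en x)) X x"
  proof (cases "x \<in> X")
    case True
    have r: "x \<in> ran (pg X)" using True by (auto simp: ran_def pg_def PX_def intro!: exI[of _ "en x"])
    have t: "(THE p. pg X p = Some x) = en x" using True by (auto simp: pg_def PX_def split: if_splits)
    show ?thesis using True r t by (simp add: unit_pb_def)
  qed (simp add: unit_pb_def)
qed

lemma embed_tup: assumes G: "gring A" and c: "\<forall>x\<in>X. c x \<in> carr A {1}" and X: "finite X"
  shows "embed A X c \<in> tup A X (idm X)"
  using c X by (auto simp: embed_def tup_def fib_idm intro!: gr_tr[OF G] pbij_sing)

lemma colon_identity:
  assumes G: "gring A" and X: "finite X" and b: "b \<in> carr A X" and d: "d \<in> carr A X"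
    and c: "\<forall>x\<in>X. c x \<in> carr A {1}" and y: "y \<in> carr A {1}"
  shows "mul1 A (con A X {1} (cmap X) (mul A X X (idm X) b (embed A X c)) (restrict (\<lambda>_. d) {1})) y =
     con A (PX X) {1} (cmap (PX X)) (mul A (PX X) (PX X) (idm (PX X)) (tr A X (PX X) (io X) b)
        (embed A (PX X) (restrict (\<lambda>p. mul1 A (c (snd (prod_decode p))) y) (PX X))))
        (restrict (\<lambda>_. tr A X (PX X) (io X) d) {1})"
proof -
  define P where "P = PX X"
  define e where "e = embed A X c"
  define u where "u = mul A X X (idm X) b e"
  define w where "w = con A X {1} (cmap X) u (restrict (\<lambda>_. d) {1})"
  define at where "at = restrict (\<lambda>x. tr A {1} {en x} (sm 1 (en x)) y) X"
  define c' where "c' = restrict (\<lambda>p. mul1 A (c (snd (prod_decode p))) y) P"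
  define E' where "E' = embed A P c'"
  define U where "U = unit_pb A X (pg X)"
  have P: "finite P" unfolding P_def using X by (rule PX_fin)
  have e: "e \<in> tup A X (idm X)" unfolding e_def by (rule embed_tup[OF G c X])
  have u: "u \<in> carr A X" unfolding u_def by (rule gr_mul[OF G X X pmap_idm b e])
  have at: "at \<in> tup A X (pg X)" unfolding at_def
    using y by (auto simp: tup_def fib_pg intro!: gr_tr[OF G] pbij_sing)
  have c'c: "\<forall>p\<in>P. c' p \<in> carr A {1}" unfolding c'_def P_def using c y by (auto simp: PX_def intro!: mul1_carr[OF G])
  have E': "E' \<in> tup A P (idm P)" unfolding E'_def by (rule embed_tup[OF G c'c P])
  have U: "U \<in> tup A X (pg X)" unfolding U_def unit_pb_pg by (auto simp: tup_def fib_pg unit_at_carr[OF G])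
  have eX: "restrict e X = e" unfolding e_def embed_def by simp
  have atX: "restrict at X = at" unfolding at_def by simp
  have UX: "restrict U X = U" unfolding U_def unit_pb_def by simp
  have E'P: "restrict E' P = E'" unfolding E'_def embed_def by simp
  have D1: "restrict (\<lambda>_. u) {1} \<in> tup A {1} (sm 1 1 \<circ>\<^sub>m cmap X)" using u by (simp add: tup_sing cmap_comp fib_cmap)
  have Y1: "restrict (\<lambda>_. y) {1} \<in> tup A {1} (sm 1 1)" using y by (simp add: tup_sing fib_sm11)
  have C1: "restrict (\<lambda>_. d) {1} \<in> tup A {1} (cmap X)" using d by (simp add: tup_sing fib_cmap)
  have EPB: "fmul A {1} (sm 1 1) (sm 1 1) (fcon A {1} (sm 1 1) (cmap X) (restrict (\<lambda>_. u) {1}) (restrict (\<lambda>_. d) {1})) (restrict (\<lambda>_. y) {1}) =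
          fcon A {1} (sm 1 1 \<circ>\<^sub>m sm 1 1) (pbf (sm 1 1) (cmap X)) (fmul A {1} (sm 1 1 \<circ>\<^sub>m cmap X) (pbg (sm 1 1) (cmap X)) (restrict (\<lambda>_. u) {1}) (pb_a A (sm 1 1) (cmap X) X (restrict (\<lambda>_. y) {1}))) (pb_c A (sm 1 1) (cmap X) {1} (restrict (\<lambda>_. d) {1}))"
    by (rule gr_pb[OF G _ _ X _ pmap_sing pmap_cmap pmap_sing D1 Y1 C1]) simp_all
  have i1: "fcon A {1} (sm 1 1) (cmap X) (restrict (\<lambda>_. u) {1}) (restrict (\<lambda>_. d) {1}) = restrict (\<lambda>_. w) {1}"
    by (rule ext) (simp add: fcon_def w_def col_simps)
  have i2: "pb_a A (sm 1 1) (cmap X) X (restrict (\<lambda>_. y) {1}) = at" unfolding L4 at_def by simp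
  have i3: "fmul A {1} (sm 1 1 \<circ>\<^sub>m cmap X) (pg X) (restrict (\<lambda>_. u) {1}) at = restrict (\<lambda>_. mul A P X (pg X) u at) {1}"
    by (rule ext) (simp add: fmul_def col_simps atX P_def)
  have S1: "mul1 A w y = con A P {1} (cmap P) (mul A P X (pg X) u at) (restrict (\<lambda>_. tr A X P (io X) d) {1})"
    using fun_cong[OF EPB, of 1] unfolding i1 i2 L2 L3 L5 i3
    by (simp add: fmul_def fcon_def col_simps mul1_def P_def)
  have B1: "restrict (\<lambda>_. b) {1} \<in> tup A {1} (cmap X)" using b by (simp add: tup_sing fib_cmap)
  have EA: "fmul A {1} (cmap X) (idm X \<circ>\<^sub>m pg X) (restrict (\<lambda>_. b) {1}) (fmul A X (idm X) (pg X) e at)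
      = fmul A {1} (cmap X \<circ>\<^sub>m idm X) (pg X) (fmul A {1} (cmap X) (idm X) (restrict (\<lambda>_. b) {1}) e) at"
    by (rule gr_assoc1[OF G _ X X _ pmap_cmap pmap_idm pmap_pg B1 e at]) (simp_all add: PX_fin X)
  define V where "V = fmul A X (idm X) (pg X) e at"
  have VX: "restrict V X = V" unfolding V_def fmul_def by simp
  have j1: "fmul A {1} (cmap X) (idm X) (restrict (\<lambda>_. b) {1}) e = restrict (\<lambda>_. u) {1}"
    by (rule ext) (simp add: fmul_def col_simps u_def eX)
  have SA: "mul A P X (pg X) u at = mul A P X (pg X) b V"
    using fun_cong[OF EA, of 1] unfolding j1 V_def[symmetric]
    by (simp add: fmul_def col_simps VX atX P_def)
  have EC: "fmul A {1} (cmap X) (pg X \<circ>\<^sub>m idm P) (restrict (\<lambda>_. b) {1}) (fmul A X (pg X) (idm P) U E')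
      = fmul A {1} (cmap X \<circ>\<^sub>m pg X) (idm P) (fmul A {1} (cmap X) (pg X) (restrict (\<lambda>_. b) {1}) U) E'"
    unfolding P_def
    by (rule gr_assoc1[OF G _ X _ _ pmap_cmap pmap_pg pmap_idm B1 U E'[unfolded P_def]]) (simp_all add: PX_fin X)
  define V' where "V' = fmul A X (pg X) (idm P) U E'"
  have V'X: "restrict V' X = V'" unfolding V'_def fmul_def by simp
  have SD: "mul A P X (pg X) b U = tr A X P (io X) b"
    unfolding P_def U_def using gr_ptr[OF G X PX_fin[OF X] pbij_io b] by (simp add: ptr_io)
  have k1: "fmul A {1} (cmap X) (pg X) (restrict (\<lambda>_. b) {1}) U = restrict (\<lambda>_. tr A X P (io X) b) {1}"
    by (rule ext) (simp add: fmul_def col_simps UX SD[unfolded P_def] P_def)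
  have SC: "mul A P X (pg X) b V' = mul A P P (idm P) (tr A X P (io X) b) E'"
    using fun_cong[OF EC, of 1] unfolding k1 V'_def[symmetric]
    by (simp add: fmul_def col_simps V'X E'P[unfolded P_def] P_def)
  have SB: "V = V'"
  proof (rule ext)
    fix x show "V x = V' x"
    proof (cases "x \<in> X")
      case False thus ?thesis unfolding V_def V'_def fmul_def by simp
    next
      case True
      have cx: "c x \<in> carr A {1}" using c True by simp
      have trc: "tr A {1} {x} (sm 1 x) (c x) \<in> carr A {x}" by (rule gr_tr[OF G _ _ pbij_sing cx]) simp_all
      have enP: "en x \<in> P" unfolding P_def using True by (simp add: PX_enc)
      have c'x: "c' (en x) = mul1 A (c x) y" unfolding c'_def using enP by simp
      have m: "mul1 A (c x) y \<in> carr A {1}" by (rule mul1_carr[OF G cx y])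
      have trm: "tr A {1} {en x} (sm 1 (en x)) (mul1 A (c x) y) \<in> carr A {en x}" by (rule gr_tr[OF G _ _ pbij_sing m]) simp_all
      have "V x = mul A {en x} {x} (sm (en x) x) (tr A {1} {x} (sm 1 x) (c x)) (restrict (\<lambda>_. tr A {1} {en x} (sm 1 (en x)) y) {x})"
        unfolding V_def using True by (simp add: fmul_def idm_pg fib_pg fib_idm pg_restr1 e_def embed_def at_def rr) (rule arg_cong[where f="mul A {en x} {x} (sm (en x) x) (tr A {1} {x} (sm 1 x) (c x))"], rule ext, simp)
      also have "\<dots> = tr A {1} {en x} (sm 1 (en x)) (mul1 A (c x) y)"
        using N1[OF G trc y, of "en x"] N2[OF G cx y, of x] by simp
      also have "\<dots> = V' x"
      proof -
        have "V' x = mul A {en x} {en x} (sm (en x) (en x)) (unit_at A (en x)) (restrict (\<lambda>_. tr A {1} {en x} (sm 1 (en x)) (c' (en x))) {en x})"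
          unfolding V'_def P_def using True
          by (simp add: fmul_def pg_idm fib_pg idm_restr1 PX_enc U_def unit_pb_pg E'_def embed_def P_def)
             (rule arg_cong[where f="mul A {en x} {en x} (sm (en x) (en x)) (unit_at A (en x))"], rule ext, simp add: PX_enc)
        thus ?thesis using c'x N4[OF G trm] by simp
      qed
      finally show ?thesis .
    qed
  qed
  show ?thesis
    using S1 SA SB SC unfolding w_def u_def e_def E'_def c'_def P_def by simp
qed



abbreviation hexpr :: "'a gring \<Rightarrow> nat set \<Rightarrow> 'a \<Rightarrow> (nat \<Rightarrow> 'a) \<Rightarrow> 'a \<Rightarrow> 'a" where
  "hexpr A X b c d \<equiv> con A X {1} (cmap X) (mul A X X (idm X) b (embed A X c)) (restrict (\<lambda>_. d) {1})"

lemma hI: "h_ideal A I \<Longrightarrow> finite X \<Longrightarrow> b \<in> carr A X \<Longrightarrow> d \<in> carr A X \<Longrightarrow> c \<in> extensional X \<Longrightarrow> \<forall>x\<in>X. c x \<in> I \<Longrightarrow> hexpr A X b c d \<in> I"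
  unfolding h_ideal_def by blast
lemma hI_sub: "h_ideal A I \<Longrightarrow> I \<subseteq> carr A {1}" unfolding h_ideal_def by blast
lemma hI_intro: "I \<subseteq> carr A {1} \<Longrightarrow> (\<And>X b d c. finite X \<Longrightarrow> b \<in> carr A X \<Longrightarrow> d \<in> carr A X \<Longrightarrow> c \<in> extensional X \<Longrightarrow> \<forall>x\<in>X. c x \<in> I \<Longrightarrow> hexpr A X b c d \<in> I) \<Longrightarrow> h_ideal A I"
  unfolding h_ideal_def by blast

lemma hexpr_carr: assumes G: "gring A" and X: "finite X" and b: "b \<in> carr A X" and d: "d \<in> carr A X" and c: "\<forall>x\<in>X. c x \<in> carr A {1}"
  shows "hexpr A X b c d \<in> carr A {1}"
proof -
  have u: "mul A X X (idm X) b (embed A X c) \<in> carr A X" by (rule gr_mul[OF G X X pmap_idm b embed_tup[OF G c X]])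
  show ?thesis by (rule gr_con[OF G X _ pmap_cmap u]) (simp_all add: tup_sing fib_cmap d)
qed

lemma carr_ideal: "gring A \<Longrightarrow> h_ideal A (carr A {1})"
  by (rule hI_intro) (auto intro: hexpr_carr)

definition Gen :: "'a gring \<Rightarrow> 'a set \<Rightarrow> 'a set" where
  "Gen A S = {z \<in> carr A {1}. \<forall>J. h_ideal A J \<and> S \<subseteq> J \<longrightarrow> z \<in> J}"

lemma Gen_ideal: assumes G: "gring A" shows "h_ideal A (Gen A S)"
proof (rule hI_intro)
  show "Gen A S \<subseteq> carr A {1}" unfolding Gen_def by blast
next
  fix X b d c assume X: "finite X" and b: "b \<in> carr A X" and d: "d \<in> carr A X" and c: "c \<in> extensional X" and cI: "\<forall>x\<in>X. c x \<in> Gen A S"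
  have cc: "\<forall>x\<in>X. c x \<in> carr A {1}" using cI unfolding Gen_def by blast
  show "hexpr A X b c d \<in> Gen A S" unfolding Gen_def
  proof (intro CollectI conjI allI impI)
    show "hexpr A X b c d \<in> carr A {1}" by (rule hexpr_carr[OF G X b d cc])
    fix J assume J: "h_ideal A J \<and> S \<subseteq> J"
    have "\<forall>x\<in>X. c x \<in> J" using cI J unfolding Gen_def by blast
    thus "hexpr A X b c d \<in> J" using hI[OF _ X b d c] J by blast
  qed
qed
lemma Gen_sup: "gring A \<Longrightarrow> S \<subseteq> carr A {1} \<Longrightarrow> S \<subseteq> Gen A S"
  unfolding Gen_def by blast
lemma Gen_least: "h_ideal A J \<Longrightarrow> S \<subseteq> J \<Longrightarrow> Gen A S \<subseteq> J"
  unfolding Gen_def by blast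

lemma colon_ideal: assumes G: "gring A" and Q: "h_ideal A Q" and y: "y \<in> carr A {1}"
  shows "h_ideal A {z \<in> carr A {1}. mul1 A z y \<in> Q}"
proof (rule hI_intro)
  show "{z \<in> carr A {1}. mul1 A z y \<in> Q} \<subseteq> carr A {1}" by blast
next
  fix X b d c assume X: "finite X" and b: "b \<in> carr A X" and d: "d \<in> carr A X" and c: "c \<in> extensional X"
    and cI: "\<forall>x\<in>X. c x \<in> {z \<in> carr A {1}. mul1 A z y \<in> Q}"
  have cc: "\<forall>x\<in>X. c x \<in> carr A {1}" using cI by blast
  have P: "finite (PX X)" by (rule PX_fin[OF X])
  have b': "tr A X (PX X) (io X) b \<in> carr A (PX X)" by (rule gr_tr[OF G X P pbij_io b])
  have d': "tr A X (PX X) (io X) d \<in> carr A (PX X)" by (rule gr_tr[OF G X P pbij_io d])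
  have c'Q: "\<forall>p\<in>PX X. restrict (\<lambda>p. mul1 A (c (snd (prod_decode p))) y) (PX X) p \<in> Q"
    using cI by (auto simp: PX_def)
  have "hexpr A (PX X) (tr A X (PX X) (io X) b) (restrict (\<lambda>p. mul1 A (c (snd (prod_decode p))) y) (PX X)) (tr A X (PX X) (io X) d) \<in> Q"
    by (rule hI[OF Q P b' d' _ c'Q]) (rule restrict_extensional)
  hence "mul1 A (hexpr A X b c d) y \<in> Q" using colon_identity[OF G X b d cc y] by simp
  thus "hexpr A X b c d \<in> {z \<in> carr A {1}. mul1 A z y \<in> Q}" using hexpr_carr[OF G X b d cc] by blast
qed

lemma embed_sing: assumes G: "gring A" and z: "z \<in> carr A {1}"
  shows "embed A {1} (restrict (\<lambda>_. z) {1}) = restrict (\<lambda>_. z) {1}"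
  by (rule ext) (simp add: embed_def gr_tr_id[OF G _ z, unfolded idm_sing])

lemma left_ideal: assumes G: "gring A" and Q: "h_ideal A Q" and z: "z \<in> Q" and y: "y \<in> carr A {1}"
  shows "mul1 A y z \<in> Q"
proof -
  have zc: "z \<in> carr A {1}" using hI_sub[OF Q] z by blast
  have "hexpr A {1} y (restrict (\<lambda>_. z) {1}) (one A) \<in> Q"
    by (rule hI[OF Q _ y gr_one[OF G]]) (simp_all add: z)
  moreover have "hexpr A {1} y (restrict (\<lambda>_. z) {1}) (one A) = mul1 A y z"
    using U3[OF G mul1_carr[OF G y zc]] by (simp add: embed_sing[OF G zc] cmap_sing mul1_def idm_sing)
  ultimately show ?thesis by simp
qed

lemma right_ideal: assumes G: "gring A" and Q: "h_ideal A Q" and z: "z \<in> Q" and y: "y \<in> carr A {1}"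
  shows "mul1 A z y \<in> Q"
  using left_ideal[OF G Q z y] comm[OF G _ y] hI_sub[OF Q] z by auto

lemma hom_tr: assumes GA: "gring A" and GB: "gring B" and H: "ghom A B \<phi>" and a: "a \<in> carr A {1}"
  shows "\<phi> {x} (tr A {1} {x} (sm 1 x) a) = tr B {1} {x} (sm 1 x) (\<phi> {1} a)"
proof -
  have o: "restrict (\<lambda>_. one A) {x} \<in> tup A {x} (sm 1 x)" using gr_one[OF GA] by (simp add: tup_sing fib_sing)
  have ht: "htup \<phi> {x} (sm 1 x) (restrict (\<lambda>_. one A) {x}) = restrict (\<lambda>_. one B) {x}"
    by (rule ext) (simp add: htup_def sing_simps hm_one[OF H])
  have pa: "\<phi> {1} a \<in> carr B {1}" by (rule hm_carr[OF H _ a]) simp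
  show ?thesis
    unfolding tr_as_con[OF GA a] tr_as_con[OF GB pa]
    using hm_con[OF H _ _ pmap_sing a o] ht by simp
qed

lemma hom_mul1: assumes GA: "gring A" and H: "ghom A B \<phi>" and a: "a \<in> carr A {1}" and b: "b \<in> carr A {1}"
  shows "\<phi> {1} (mul1 A a b) = mul1 B (\<phi> {1} a) (\<phi> {1} b)"
proof -
  have bt: "restrict (\<lambda>_. b) {1} \<in> tup A {1} (sm 1 1)" using b by (simp add: tup_sing fib_sing)
  have ht: "htup \<phi> {1} (sm 1 1) (restrict (\<lambda>_. b) {1}) = restrict (\<lambda>_. \<phi> {1} b) {1}"
    by (rule ext) (simp add: htup_def sing_simps)
  show ?thesis unfolding mul1_def idm_sing using hm_mul[OF H _ _ pmap_sing a bt] ht by simp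
qed

lemma hom_hexpr: assumes GA: "gring A" and GB: "gring B" and H: "ghom A B \<phi>" and X: "finite X"
  and b: "b \<in> carr A X" and d: "d \<in> carr A X" and c: "\<forall>x\<in>X. c x \<in> carr A {1}"
  shows "\<phi> {1} (hexpr A X b c d) = hexpr B X (\<phi> X b) (restrict (\<lambda>x. \<phi> {1} (c x)) X) (\<phi> X d)"
proof -
  have e: "embed A X c \<in> tup A X (idm X)" by (rule embed_tup[OF GA c X])
  have u: "mul A X X (idm X) b (embed A X c) \<in> carr A X" by (rule gr_mul[OF GA X X pmap_idm b e])
  have dt: "restrict (\<lambda>_. d) {1} \<in> tup A {1} (cmap X)" using d by (simp add: tup_sing fib_cmap)
  have h1: "htup \<phi> {1} (cmap X) (restrict (\<lambda>_. d) {1}) = restrict (\<lambda>_. \<phi> X d) {1}"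
    by (rule ext) (simp add: htup_def fib_cmap)
  have h2: "htup \<phi> X (idm X) (embed A X c) = embed B X (restrict (\<lambda>x. \<phi> {1} (c x)) X)"
    by (rule ext) (simp add: htup_def embed_def fib_idm hom_tr[OF GA GB H] c)
  show ?thesis
    using hm_con[OF H X _ pmap_cmap u dt] hm_mul[OF H X X pmap_idm b e] h1 h2 by simp
qed

lemma hpre_prime: assumes GA: "gring A" and GB: "gring B" and H: "ghom A B \<phi>" and Q: "gprime B Q"
  shows "gprime A (hpre A \<phi> Q)"
proof -
  have QI: "h_ideal B Q" and Q1: "one B \<notin> Q" and QP: "\<forall>a\<in>carr B {1}. \<forall>b\<in>carr B {1}. mul1 B a b \<in> Q \<longrightarrow> a \<in> Q \<or> b \<in> Q"
    using Q unfolding gprime_def by blast+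
  have I: "h_ideal A (hpre A \<phi> Q)"
  proof (rule hI_intro)
    show "hpre A \<phi> Q \<subseteq> carr A {1}" unfolding hpre_def by blast
  next
    fix X b d c assume X: "finite X" and b: "b \<in> carr A X" and d: "d \<in> carr A X" and c: "c \<in> extensional X"
      and cI: "\<forall>x\<in>X. c x \<in> hpre A \<phi> Q"
    have cc: "\<forall>x\<in>X. c x \<in> carr A {1}" using cI unfolding hpre_def by blast
    have "hexpr B X (\<phi> X b) (restrict (\<lambda>x. \<phi> {1} (c x)) X) (\<phi> X d) \<in> Q"
      by (rule hI[OF QI X hm_carr[OF H X b] hm_carr[OF H X d]]) (use cI in \<open>auto simp: hpre_def\<close>)
    thus "hexpr A X b c d \<in> hpre A \<phi> Q"
      unfolding hpre_def using hexpr_carr[OF GA X b d cc] hom_hexpr[OF GA GB H X b d cc] by simp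
  qed
  have O: "one A \<notin> hpre A \<phi> Q" using Q1 hm_one[OF H] unfolding hpre_def by simp
  have PP: "\<forall>a\<in>carr A {1}. \<forall>b\<in>carr A {1}. mul1 A a b \<in> hpre A \<phi> Q \<longrightarrow> a \<in> hpre A \<phi> Q \<or> b \<in> hpre A \<phi> Q"
    using QP hom_mul1[OF GA H] hm_carr[OF H] unfolding hpre_def by auto
  show ?thesis unfolding gprime_def using I O PP by blast
qed



lemma finite_chain_bound: assumes "finite F" "F \<subseteq> \<Union>C" "C \<noteq> {}" "chain\<^sub>\<subseteq> C"
  shows "\<exists>J\<in>C. F \<subseteq> J"
  using assms
proof (induction F rule: finite_induct)
  case empty thus ?case by blast
next
  case (insert a F)
  then obtain J where J: "J \<in> C" "F \<subseteq> J" by blast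
  obtain K where K: "K \<in> C" "a \<in> K" using insert.prems by blast
  from insert.prems(3) J(1) K(1) have "J \<subseteq> K \<or> K \<subseteq> J" unfolding chain_subset_def by blast
  thus ?case using J K by blast
qed

lemma exists_max:
  assumes G: "gring B" and bI: "h_ideal B bb" and disj: "bb \<inter> T = {}"
  shows "\<exists>Q. h_ideal B Q \<and> bb \<subseteq> Q \<and> Q \<inter> T = {} \<and> (\<forall>J. h_ideal B J \<and> Q \<subseteq> J \<and> J \<inter> T = {} \<longrightarrow> J = Q)"
proof -
  define S where "S = {J. h_ideal B J \<and> bb \<subseteq> J \<and> J \<inter> T = {}}"
  have "\<forall>C\<in>chains S. \<exists>U\<in>S. \<forall>X\<in>C. X \<subseteq> U"
  proof
    fix C assume C: "C \<in> chains S"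
    hence CS: "C \<subseteq> S" and ch: "chain\<^sub>\<subseteq> C" unfolding chains_def by blast+
    show "\<exists>U\<in>S. \<forall>X\<in>C. X \<subseteq> U"
    proof (cases "C = {}")
      case True thus ?thesis using bI disj unfolding S_def by blast
    next
      case False
      have US: "\<Union>C \<in> S" unfolding S_def
      proof (intro CollectI conjI)
        show "h_ideal B (\<Union>C)"
        proof (rule hI_intro)
          show "\<Union>C \<subseteq> carr B {1}" using CS hI_sub unfolding S_def by blast
        next
          fix X b d c assume X: "finite X" and b: "b \<in> carr B X" and d: "d \<in> carr B X" and c: "c \<in> extensional X" and cI: "\<forall>x\<in>X. c x \<in> \<Union>C"
          obtain J where J: "J \<in> C" "c ` X \<subseteq> J" using finite_chain_bound[of "c ` X" C] X cI False ch by blast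
          have JI: "h_ideal B J" using J CS unfolding S_def by blast
          have "hexpr B X b c d \<in> J" by (rule hI[OF JI X b d c]) (use J in blast)
          thus "hexpr B X b c d \<in> \<Union>C" using J by blast
        qed
        show "bb \<subseteq> \<Union>C" using False CS unfolding S_def by blast
        show "\<Union>C \<inter> T = {}" using CS unfolding S_def by blast
      qed
      thus ?thesis by blast
    qed
  qed
  from Zorn_Lemma2[OF this] obtain M where M: "M \<in> S" "\<forall>X\<in>S. M \<subseteq> X \<longrightarrow> X = M" by blast
  have M1: "h_ideal B M \<and> bb \<subseteq> M \<and> M \<inter> T = {}" using M(1) unfolding S_def by blast
  have M2: "\<forall>J. h_ideal B J \<and> M \<subseteq> J \<and> J \<inter> T = {} \<longrightarrow> J = M"
  proof (intro allI impI)
    fix J assume J: "h_ideal B J \<and> M \<subseteq> J \<and> J \<inter> T = {}"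
    hence "J \<in> S" using M1 unfolding S_def by blast
    thus "J = M" using M(2) J by blast
  qed
  show ?thesis by (rule exI[of _ M]) (use M1 M2 in blast)
qed

lemma max_prime:
  assumes GA: "gring A" and GB: "gring B" and H: "ghom A B \<phi>" and P: "gprime A P"
    and QI: "h_ideal B Q" and bQ: "bb \<subseteq> Q" and QT: "Q \<inter> (\<phi> {1} ` (carr A {1} - P)) = {}"
    and Qmax: "\<forall>J. h_ideal B J \<and> Q \<subseteq> J \<and> J \<inter> (\<phi> {1} ` (carr A {1} - P)) = {} \<longrightarrow> J = Q"
  shows "gprime B Q"
proof -
  define T where "T = \<phi> {1} ` (carr A {1} - P)"
  have P1: "one A \<notin> P" and PP: "\<forall>a\<in>carr A {1}. \<forall>b\<in>carr A {1}. mul1 A a b \<in> P \<longrightarrow> a \<in> P \<or> b \<in> P"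
    using P unfolding gprime_def by blast+
  have oT: "one B \<in> T" unfolding T_def using hm_one[OF H] gr_one[OF GA] P1 by (metis DiffI image_eqI)
  have O: "one B \<notin> Q" using oT QT unfolding T_def by blast
  have Tc: "T \<subseteq> carr B {1}" unfolding T_def using hm_carr[OF H] by blast
  have Tmul: "mul1 B t2 t1 \<in> T" if tt1: "t1 \<in> T" and tt2: "t2 \<in> T" for t1 t2
  proof -
    obtain s1 where s1: "s1 \<in> carr A {1}" "s1 \<notin> P" "t1 = \<phi> {1} s1" using tt1 unfolding T_def by blast
    obtain s2 where s2: "s2 \<in> carr A {1}" "s2 \<notin> P" "t2 = \<phi> {1} s2" using tt2 unfolding T_def by blast
    have "mul1 A s2 s1 \<in> carr A {1}" by (rule mul1_carr[OF GA s2(1) s1(1)])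
    moreover have "mul1 A s2 s1 \<notin> P" using PP s1 s2 by blast
    ultimately show ?thesis unfolding T_def using hom_mul1[OF GA H s2(1) s1(1)] s1 s2
      by (intro image_eqI[where x="mul1 A s2 s1"]) auto
  qed
  have Qc: "Q \<subseteq> carr B {1}" by (rule hI_sub[OF QI])
  have meet: "\<exists>t\<in>T. t \<in> Gen B (insert z Q)" if z: "z \<in> carr B {1}" "z \<notin> Q" for z
  proof (rule ccontr)
    assume "\<not> ?thesis"
    hence "Gen B (insert z Q) \<inter> T = {}" by blast
    moreover have "h_ideal B (Gen B (insert z Q))" by (rule Gen_ideal[OF GB])
    moreover have "insert z Q \<subseteq> Gen B (insert z Q)" by (rule Gen_sup[OF GB]) (use z Qc in blast)
    ultimately have "Gen B (insert z Q) = Q" using Qmax unfolding T_def by blast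
    thus False using \<open>insert z Q \<subseteq> Gen B (insert z Q)\<close> z by blast
  qed
  have PR: "\<forall>x\<in>carr B {1}. \<forall>y\<in>carr B {1}. mul1 B x y \<in> Q \<longrightarrow> x \<in> Q \<or> y \<in> Q"
  proof (intro ballI impI, rule ccontr)
    fix x y assume x: "x \<in> carr B {1}" and y: "y \<in> carr B {1}" and xy: "mul1 B x y \<in> Q" and n: "\<not> (x \<in> Q \<or> y \<in> Q)"
    obtain t1 where t1: "t1 \<in> T" "t1 \<in> Gen B (insert x Q)" using meet[OF x] n by blast
    have CyI: "h_ideal B {z \<in> carr B {1}. mul1 B z y \<in> Q}" by (rule colon_ideal[OF GB QI y])
    have "insert x Q \<subseteq> {z \<in> carr B {1}. mul1 B z y \<in> Q}" using x xy Qc right_ideal[OF GB QI _ y] by blast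
    hence "Gen B (insert x Q) \<subseteq> {z \<in> carr B {1}. mul1 B z y \<in> Q}" by (rule Gen_least[OF CyI])
    hence t1y: "mul1 B t1 y \<in> Q" and t1c: "t1 \<in> carr B {1}" using t1 by blast+
    obtain t2 where t2: "t2 \<in> T" "t2 \<in> Gen B (insert y Q)" using meet[OF y] n by blast
    have CtI: "h_ideal B {z \<in> carr B {1}. mul1 B z t1 \<in> Q}" by (rule colon_ideal[OF GB QI t1c])
    have "mul1 B y t1 \<in> Q" using t1y comm[OF GB t1c y] by simp
    hence "insert y Q \<subseteq> {z \<in> carr B {1}. mul1 B z t1 \<in> Q}" using y Qc right_ideal[OF GB QI _ t1c] by blast
    hence "Gen B (insert y Q) \<subseteq> {z \<in> carr B {1}. mul1 B z t1 \<in> Q}" by (rule Gen_least[OF CtI])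
    hence "mul1 B t2 t1 \<in> Q" using t2 by blast
    moreover have "mul1 B t2 t1 \<in> T" by (rule Tmul[OF t1(1) t2(1)])
    ultimately show False using QT unfolding T_def by blast
  qed
  show ?thesis unfolding gprime_def using QI O PR by blast
qed

theorem lemma4p4p5:
  fixes A :: "'a gring" and B :: "'b gring" and \<phi> :: "nat set \<Rightarrow> 'a \<Rightarrow> 'b" and \<bb> :: "'b set"
  assumes "gring A" and "gring B" and "ghom A B \<phi>" and "h_ideal B \<bb>"
  shows "Vz A (hpre A \<phi> \<bb>) = zariski_closure A ((\<lambda>Q. hpre A \<phi> Q) ` Vz B \<bb>)"
proof
  note GA = assms(1) and GB = assms(2) and H = assms(3) and bI = assms(4)
  show "zariski_closure A ((\<lambda>Q. hpre A \<phi> Q) ` Vz B \<bb>) \<subseteq> Vz A (hpre A \<phi> \<bb>)"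
  proof
    fix P assume P: "P \<in> zariski_closure A ((\<lambda>Q. hpre A \<phi> Q) ` Vz B \<bb>)"
    have sub: "hpre A \<phi> \<bb> \<subseteq> carr A {1}" unfolding hpre_def by blast
    have S: "(\<lambda>Q. hpre A \<phi> Q) ` Vz B \<bb> \<subseteq> Vz A (hpre A \<phi> \<bb>)"
    proof
      fix R assume "R \<in> (\<lambda>Q. hpre A \<phi> Q) ` Vz B \<bb>"
      then obtain Q where Q: "gprime B Q" "\<bb> \<subseteq> Q" "R = hpre A \<phi> Q" unfolding Vz_def gspec_def by blast
      have "gprime A R" using hpre_prime[OF GA GB H Q(1)] Q(3) by simp
      moreover have "hpre A \<phi> \<bb> \<subseteq> R" using Q(2,3) unfolding hpre_def by blast
      ultimately show "R \<in> Vz A (hpre A \<phi> \<bb>)" unfolding Vz_def gspec_def by blast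
    qed
    show "P \<in> Vz A (hpre A \<phi> \<bb>)" using P sub S unfolding zariski_closure_def by blast
  qed
next
  note GA = assms(1) and GB = assms(2) and H = assms(3) and bI = assms(4)
  show "Vz A (hpre A \<phi> \<bb>) \<subseteq> zariski_closure A ((\<lambda>Q. hpre A \<phi> Q) ` Vz B \<bb>)"
  proof
    fix P assume P: "P \<in> Vz A (hpre A \<phi> \<bb>)"
    hence Pp: "gprime A P" and Pb: "hpre A \<phi> \<bb> \<subseteq> P" unfolding Vz_def gspec_def by blast+
    define T where "T = \<phi> {1} ` (carr A {1} - P)"
    have disj: "\<bb> \<inter> T = {}" using Pb unfolding T_def hpre_def by blast
    have "I \<subseteq> P" if I: "I \<subseteq> carr A {1}" "(\<lambda>Q. hpre A \<phi> Q) ` Vz B \<bb> \<subseteq> Vz A I" for I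
    proof
      fix a assume a: "a \<in> I"
      show "a \<in> P"
      proof (rule ccontr)
        assume aP: "a \<notin> P"
        obtain Q where Q: "h_ideal B Q" "\<bb> \<subseteq> Q" "Q \<inter> T = {}" "\<forall>J. h_ideal B J \<and> Q \<subseteq> J \<and> J \<inter> T = {} \<longrightarrow> J = Q"
          using exists_max[OF GB bI disj] by blast
        have Qp: "gprime B Q" by (rule max_prime[OF GA GB H Pp Q(1,2) Q(3,4)[unfolded T_def]])
        hence "Q \<in> Vz B \<bb>" using Q(2) unfolding Vz_def gspec_def by blast
        hence "hpre A \<phi> Q \<in> Vz A I" using I(2) by blast
        hence "a \<in> hpre A \<phi> Q" using a unfolding Vz_def by blast
        hence "\<phi> {1} a \<in> Q" unfolding hpre_def by blast
        moreover have "\<phi> {1} a \<in> T" unfolding T_def using a I(1) aP by blast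
        ultimately show False using Q(3) by blast
      qed
    qed
    thus "P \<in> zariski_closure A ((\<lambda>Q. hpre A \<phi> Q) ` Vz B \<bb>)"
      using P unfolding zariski_closure_def Vz_def by blast
  qed
qed


end
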